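(* Consider a constrained Markov decision process (CMDP) as described in the context, and let $\varepsilon \in (0,1)$. Run the inexact augmented Lagrangian algorithm described in the context with dual initialization $\lambda_1 = 0$, an arbitrary penalty parameter $\beta > 0$, subproblem accuracies $\epsilon_t = \mathcal{O}(1/t^2)$, and $T = \mathcal{O}(1/\varepsilon^2)$ outer iterations. Suppose that for every $t \ge 1$ an oracle is available which returns a policy $\pi_{t+1}$ satisfying $$\mathcal{L}^\beta(\pi_{t+1}, \lambda_t) \;\ge\; \max_{\pi} \mathcal{L}^\beta(\pi, \lambda_t) - \epsilon_t .$$ Then the returned (single, stationary, stochastic) policy $\pi_{T+1}$ is an $\varepsilon$-approximate solution of the CMDP, i.e. $$V^{\pi_{T+1}}_r(\rho) \ge V^*_r(\rho) - \varepsilon \quad\text{and}\quad V^{\pi_{T+1}}_{c_i}(\rho) \ge b_i - \varepsilon \ \text{ for all } i \in [m].$$ (The $\mathcal{O}(\cdot)$ notation hides constants independent of $t$ and $\varepsilon$.)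
   Context: CMDP: finite state space $\mathcal{S}$ and finite action space $\mathcal{A}$; transition kernel $\mathcal{P}(\cdot\mid s,a)$; initial distribution $\rho$ on $\mathcal{S}$; discount factor $\gamma \in [0,1)$; reward $r:\mathcal{S}\times\mathcal{A}\to[0,1]$; constraint rewards $c_1,\dots,c_m:\mathcal{S}\times\mathcal{A}\to[0,1]$; thresholds $b_1,\dots,b_m \ge 0$. A policy $\pi$ assigns to every state $s$ a probability distribution $\pi(\cdot\mid s)$ on $\mathcal{A}$. For a bounded $u:\mathcal{S}\times\mathcal{A}\to\mathbb{R}$, $Q^\pi_u(s,a) = \mathbb{E}[\sum_{\tau\ge 0}\gamma^\tau u(s_\tau,a_\tau)\mid s_0=s,a_0=a]$ with $s_{\tau+1}\sim\mathcal{P}(\cdot\mid s_\tau,a_\tau)$, $a_{\tau+1}\sim \pi(\cdot\mid s_{\tau+1})$; $V^\pi_u(s)=\sum_a \pi(a\mid s)Q^\pi_u(s,a)$ and $V^\pi_u(\rho)=\sum_s\rho(s)V^\pi_u(s)$. The CMDP problem is $\max_\pi V^\pi_r(\rho)$ subject to $V^\pi_{c_i}(\rho)\ge b_i$ for all $i\in[m]$; $V^*_r(\rho)$ denotes its optimal value. Augmented Lagrangian: for $\beta>0$ and $\lambda\in\mathbb{R}^m$, $$\mathcal{L}^\beta(\pi,\lambda) = V^\pi_r(\rho) + \frac{\beta}{2}\sum_{i=1}^m\Big(-\min\Big\{V^\pi_{c_i}(\rho)-b_i-\frac{\lambda_i}{\beta},0\Big\}^2 + \frac{\lambda_i^2}{\beta^2}\Big).$$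 Algorithm: start from an initial policy $\pi_1$ and $\lambda_1$; for $t=1,\dots,T$: obtain $\pi_{t+1}$ from the oracle (accuracy $\epsilon_t$ for $\mathcal{L}^\beta(\cdot,\lambda_t)$), then for each $i\in[m]$ set $\lambda_{t+1}[i] = \lambda_t[i] - \frac{\beta}{2}\big(V^{\pi_{t+1}}_{c_i}(\rho) - [b_i + \xi_i(\pi_{t+1})]\big)$, where $\xi_i(\pi) = \max\{V^\pi_{c_i}(\rho) - b_i - \lambda_t[i]/\beta,\,0\}$. Return $\pi_{T+1}$. *)

theory Defs
  imports "HOL-Analysis.Analysis"
begin

text \<open>Finite CMDP. States 's and actions 'a are finite types.
  Transition kernel P s a s' = P(s' | s, a); policy pol s a = pol(a | s);
  rewards are functions on state-action pairs.\<close>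

definition is_distr :: "('x::finite \<Rightarrow> real) \<Rightarrow> bool" where
  "is_distr d \<longleftrightarrow> (\<forall>x. 0 \<le> d x) \<and> (\<Sum>x\<in>UNIV. d x) = 1"

definition is_kernel :: "('s::finite \<Rightarrow> 'a::finite \<Rightarrow> 's \<Rightarrow> real) \<Rightarrow> bool" where
  "is_kernel P \<longleftrightarrow> (\<forall>s a. is_distr (P s a))"

definition is_policy :: "('s::finite \<Rightarrow> 'a::finite \<Rightarrow> real) \<Rightarrow> bool" where
  "is_policy pol \<longleftrightarrow> (\<forall>s. is_distr (pol s))"

text \<open>Distribution of (s_tau, a_tau) when (s_0,a_0) ~ d0,
  s_{tau+1} ~ P(.|s_tau,a_tau), a_{tau+1} ~ pol(.|s_{tau+1}).\<close>
fun sa_dist :: "('s::finite \<Rightarrow> 'a::finite \<Rightarrow> 's \<Rightarrow> real) \<Rightarrow> ('s \<Rightarrow> 'a \<Rightarrow> real)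
    \<Rightarrow> ('s \<times> 'a \<Rightarrow> real) \<Rightarrow> nat \<Rightarrow> 's \<times> 'a \<Rightarrow> real" where
  "sa_dist P pol d0 0 = d0"
| "sa_dist P pol d0 (Suc n) = (\<lambda>(s', a').
      (\<Sum>x\<in>UNIV. sa_dist P pol d0 n x * P (fst x) (snd x) s') * pol s' a')"

definition Qfun :: "('s::finite \<Rightarrow> 'a::finite \<Rightarrow> 's \<Rightarrow> real) \<Rightarrow> real \<Rightarrow> ('s \<Rightarrow> 'a \<Rightarrow> real)
    \<Rightarrow> ('s \<times> 'a \<Rightarrow> real) \<Rightarrow> 's \<Rightarrow> 'a \<Rightarrow> real" where
  "Qfun P \<gamma> pol u s a =
     (\<Sum>\<tau>. \<gamma> ^ \<tau> * (\<Sum>x\<in>UNIV. sa_dist P pol (\<lambda>y. if y = (s, a) then 1 else 0) \<tau> x * u x))"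

definition Vfun :: "('s::finite \<Rightarrow> 'a::finite \<Rightarrow> 's \<Rightarrow> real) \<Rightarrow> real \<Rightarrow> ('s \<Rightarrow> 'a \<Rightarrow> real)
    \<Rightarrow> ('s \<times> 'a \<Rightarrow> real) \<Rightarrow> 's \<Rightarrow> real" where
  "Vfun P \<gamma> pol u s = (\<Sum>a\<in>UNIV. pol s a * Qfun P \<gamma> pol u s a)"

definition Vrho :: "('s::finite \<Rightarrow> 'a::finite \<Rightarrow> 's \<Rightarrow> real) \<Rightarrow> real \<Rightarrow> ('s \<Rightarrow> real)
    \<Rightarrow> ('s \<Rightarrow> 'a \<Rightarrow> real) \<Rightarrow> ('s \<times> 'a \<Rightarrow> real) \<Rightarrow> real" where
  "Vrho P \<gamma> \<rho> pol u = (\<Sum>s\<in>UNIV. \<rho> s * Vfun P \<gamma> pol u s)"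

text \<open>Constraints indexed by i < m (i.e. [m] shifted to 0-based).\<close>
definition feasible_policy where
  "feasible_policy P \<gamma> \<rho> c b m pol \<longleftrightarrow>
     is_policy pol \<and> (\<forall>i<m. Vrho P \<gamma> \<rho> pol (c i) \<ge> b i)"

definition opt_value where
  "opt_value P \<gamma> \<rho> r c b m = Sup {Vrho P \<gamma> \<rho> pol r | pol. feasible_policy P \<gamma> \<rho> c b m pol}"

definition aug_lag where
  "aug_lag P \<gamma> \<rho> r c b m \<beta> pol lam =
     Vrho P \<gamma> \<rho> pol r + \<beta> / 2 * (\<Sum>i<m.
        - (min (Vrho P \<gamma> \<rho> pol (c i) - b i - lam i / \<beta>) 0)\<^sup>2 + (lam i)\<^sup>2 / \<beta>\<^sup>2)"

text \<open>Dual iterates: lam_seq ... pis 1 = lambda_1 = 0 and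
  lambda_{t+1}[i] = lambda_t[i] - beta/2 (V_{c_i}^{pi_{t+1}} - [b_i + xi_i(pi_{t+1})]),
  xi_i(pol) = max (V_{c_i}^pol - b_i - lambda_t[i]/beta) 0.
  (Index 0 is unused; lam_seq at 0 is also 0.)\<close>
fun lam_seq :: "('s::finite \<Rightarrow> 'a::finite \<Rightarrow> 's \<Rightarrow> real) \<Rightarrow> real \<Rightarrow> ('s \<Rightarrow> real)
    \<Rightarrow> (nat \<Rightarrow> 's \<times> 'a \<Rightarrow> real) \<Rightarrow> (nat \<Rightarrow> real) \<Rightarrow> real
    \<Rightarrow> (nat \<Rightarrow> 's \<Rightarrow> 'a \<Rightarrow> real) \<Rightarrow> nat \<Rightarrow> nat \<Rightarrow> real" where
  "lam_seq P \<gamma> \<rho> c b \<beta> pis 0 = (\<lambda>i. 0)"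
| "lam_seq P \<gamma> \<rho> c b \<beta> pis (Suc 0) = (\<lambda>i. 0)"
| "lam_seq P \<gamma> \<rho> c b \<beta> pis (Suc (Suc t)) = (\<lambda>i.
     let l = lam_seq P \<gamma> \<rho> c b \<beta> pis (Suc t) i;
         v = Vrho P \<gamma> \<rho> (pis (Suc (Suc t))) (c i)
     in l - \<beta> / 2 * (v - (b i + max (v - b i - l / \<beta>) 0)))"

end

theory Submission
  imports Defs
begin

definition psi :: "real \<Rightarrow> real \<Rightarrow> real \<Rightarrow> real" where
  "psi \<beta> g l = \<beta> / 2 * (- (min (g - l / \<beta>) 0)\<^sup>2 + l\<^sup>2 / \<beta>\<^sup>2)"
definition muf :: "real \<Rightarrow> real \<Rightarrow> real \<Rightarrow> real" where
  "muf \<beta> g l = max (l - \<beta> * g) 0"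
definition hh :: "real \<Rightarrow> real \<Rightarrow> real \<Rightarrow> real" where
  "hh \<beta> g l = min g (l / \<beta>)"

lemma psi_S1: assumes "\<beta> > 0" shows "psi \<beta> g l = muf \<beta> g l * g + (muf \<beta> g l - l)\<^sup>2 / (2*\<beta>)"
proof (cases "l - \<beta> * g \<ge> 0")
  case True
  then have "g - l/\<beta> \<le> 0" using assms by (simp add: field_simps)
  then show ?thesis using True assms unfolding psi_def muf_def
    by (simp add: field_simps power2_eq_square)
next
  case False
  then have "g - l/\<beta> > 0" using assms by (simp add: field_simps)
  then show ?thesis using False assms unfolding psi_def muf_def
    by (simp add: field_simps power2_eq_square)
qed

lemma hh_mu: assumes "\<beta> > 0" shows "hh \<beta> g l = (l - muf \<beta> g l) / \<beta>"
  using assms unfolding hh_def muf_def by (auto simp: field_simps min_def max_def)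

lemma psi_S2: assumes b: "\<beta> > 0" and nu: "\<nu> \<ge> 0"
  shows "\<nu> * g + (\<nu> - l)\<^sup>2 / (2*\<beta>) \<ge> psi \<beta> g l + (\<nu> - muf \<beta> g l)\<^sup>2 / (2*\<beta>)"
proof -
  have "\<nu> * g + (\<nu> - l)\<^sup>2 / (2*\<beta>) - (muf \<beta> g l * g + (muf \<beta> g l - l)\<^sup>2 / (2*\<beta>))
        - (\<nu> - muf \<beta> g l)\<^sup>2 / (2*\<beta>) = (\<nu> - muf \<beta> g l) * (g + (muf \<beta> g l - l)/\<beta>)"
    using b by (simp add: field_simps power2_eq_square)
  moreover have "(\<nu> - muf \<beta> g l) * (g + (muf \<beta> g l - l)/\<beta>) \<ge> 0"
  proof (cases "l - \<beta> * g \<ge> 0")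
    case True
    then have "g + (muf \<beta> g l - l)/\<beta> = 0" using b unfolding muf_def by (simp add: field_simps)
    then show ?thesis by simp
  next
    case False
    then have "muf \<beta> g l = 0" unfolding muf_def by simp
    moreover have "g - l/\<beta> \<ge> 0" using False b by (simp add: field_simps)
    ultimately show ?thesis using nu by simp
  qed
  ultimately show ?thesis using psi_S1[OF b, of g l] by linarith
qed

lemma psi_lh: assumes "\<beta> > 0" shows "psi \<beta> g l = l * hh \<beta> g l - \<beta> * (hh \<beta> g l)\<^sup>2 / 2"
proof (cases "g \<le> l/\<beta>")
  case True then show ?thesis using assms unfolding psi_def hh_def
    by (simp add: field_simps power2_eq_square)
next
  case False then show ?thesis using assms unfolding psi_def hh_def
    by (simp add: field_simps power2_eq_square)
qed

lemma psi_nonneg: assumes b: "\<beta> > 0" and g: "g \<ge> 0" shows "psi \<beta> g l \<ge> 0"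
proof (cases "g \<le> l/\<beta>")
  case True
  then have "hh \<beta> g l = g" unfolding hh_def by simp
  moreover have "l - \<beta> * g / 2 \<ge> 0"
  proof -
    have "\<beta> * g \<le> l" using True b by (simp add: field_simps)
    moreover have "\<beta> * g \<ge> 0" using b g by simp
    ultimately show ?thesis by linarith
  qed
  ultimately have "psi \<beta> g l = g * (l - \<beta> * g / 2)" using psi_lh[OF b, of g l]
    by (simp add: power2_eq_square algebra_simps)
  then show ?thesis using g \<open>l - \<beta> * g / 2 \<ge> 0\<close> by simp
next
  case False
  then show ?thesis using b unfolding psi_def by (simp add: min_def)
qed

lemma psi_le_lg: assumes b: "\<beta> > 0" and l: "l \<ge> 0" shows "psi \<beta> g l \<le> l * g"
proof -
  have "(l - muf \<beta> g l)\<^sup>2/(2*\<beta>) \<ge> 0" using b by simp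
  then show ?thesis using psi_S2[OF b l, of g l] by simp
qed

lemma psi_convex_l: assumes b: "\<beta> > 0"
  shows "psi \<beta> g l' \<ge> psi \<beta> g l + hh \<beta> g l * (l' - l)"
proof -
  have e1: "psi \<beta> g l' = l' * hh \<beta> g l' - \<beta> * (hh \<beta> g l')\<^sup>2 / 2" by (rule psi_lh[OF b])
  have e2: "psi \<beta> g l = l * hh \<beta> g l - \<beta> * (hh \<beta> g l)\<^sup>2 / 2" by (rule psi_lh[OF b])
  have "l' * hh \<beta> g l' - \<beta> * (hh \<beta> g l')\<^sup>2 / 2 \<ge> l * hh \<beta> g l - \<beta> * (hh \<beta> g l)\<^sup>2 / 2 + hh \<beta> g l * (l' - l)"
  proof -
    let ?a = "hh \<beta> g l" and ?c = "hh \<beta> g l'"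
    have "l' * ?c - \<beta> * ?c\<^sup>2 / 2 - (l * ?a - \<beta> * ?a\<^sup>2 / 2 + ?a * (l' - l))
         = (l' - \<beta> * ?c) * (?c - ?a) + \<beta> * (?c - ?a)\<^sup>2 / 2"
      by (simp add: field_simps power2_eq_square)
    moreover have "(l' - \<beta> * ?c) * (?c - ?a) \<ge> 0"
    proof (cases "g \<le> l'/\<beta>")
      case True
      then have "?c = g" unfolding hh_def by simp
      moreover have "?a \<le> g" unfolding hh_def by simp
      moreover have "l' - \<beta> * g \<ge> 0" using True b by (simp add: field_simps)
      ultimately show ?thesis by simp
    next
      case False
      then have "?c = l'/\<beta>" unfolding hh_def by simp
      then have "l' - \<beta> * ?c = 0" using b by simp
      then show ?thesis by simp
    qed
    moreover have "\<beta> * (?c - ?a)\<^sup>2 / 2 \<ge> 0" using b by simp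
    ultimately show ?thesis by linarith
  qed
  then show ?thesis using e1 e2 by linarith
qed

lemma psi_S4: assumes b: "\<beta> > 0" and g': "g' \<ge> 0" and s: "0 \<le> s" "s \<le> 1"
  shows "psi \<beta> ((1-s)*g + s*g') l \<ge> (1-s) * psi \<beta> g l + s*(1-s)*(muf \<beta> g l - l)\<^sup>2/(2*\<beta>)"
proof -
  define gs where "gs = (1-s)*g + s*g'"
  define \<nu> where "\<nu> = muf \<beta> gs l"
  define \<mu> where "\<mu> = muf \<beta> g l"
  have nu0: "\<nu> \<ge> 0" unfolding \<nu>_def muf_def by simp
  have "psi \<beta> gs l = \<nu> * gs + (\<nu> - l)\<^sup>2/(2*\<beta>)" unfolding \<nu>_def by (rule psi_S1[OF b])
  also have "\<dots> = (1-s)*(\<nu>*g + (\<nu> - l)\<^sup>2/(2*\<beta>)) + s*(\<nu>*g' + (\<nu> - l)\<^sup>2/(2*\<beta>))"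
    unfolding gs_def using b by (simp add: field_simps)
  finally have A: "psi \<beta> gs l = (1-s)*(\<nu>*g + (\<nu> - l)\<^sup>2/(2*\<beta>)) + s*(\<nu>*g' + (\<nu> - l)\<^sup>2/(2*\<beta>))" .
  have B: "\<nu>*g + (\<nu> - l)\<^sup>2/(2*\<beta>) \<ge> psi \<beta> g l + (\<nu> - \<mu>)\<^sup>2/(2*\<beta>)"
    unfolding \<mu>_def by (rule psi_S2[OF b nu0])
  have C: "\<nu>*g' \<ge> 0" using nu0 g' by simp
  have D: "(1-s)*(\<nu> - \<mu>)\<^sup>2 + s*(\<nu> - l)\<^sup>2 - s*(1-s)*(\<mu> - l)\<^sup>2 = ((1-s)*(\<nu>-\<mu>) + s*(\<nu>-l))\<^sup>2"
    by (simp add: algebra_simps power2_eq_square)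
  have "(1-s)*(\<nu>*g + (\<nu> - l)\<^sup>2/(2*\<beta>)) \<ge> (1-s)*(psi \<beta> g l + (\<nu> - \<mu>)\<^sup>2/(2*\<beta>))"
    using B s by (simp add: mult_left_mono)
  moreover have "s*(\<nu>*g' + (\<nu> - l)\<^sup>2/(2*\<beta>)) \<ge> s*((\<nu> - l)\<^sup>2/(2*\<beta>))"
    using C s by (intro mult_left_mono) auto
  moreover have "(1-s)*((\<nu> - \<mu>)\<^sup>2/(2*\<beta>)) + s*((\<nu> - l)\<^sup>2/(2*\<beta>)) \<ge> s*(1-s)*(\<mu> - l)\<^sup>2/(2*\<beta>)"
  proof -
    have "(1-s)*((\<nu> - \<mu>)\<^sup>2/(2*\<beta>)) + s*((\<nu> - l)\<^sup>2/(2*\<beta>)) - s*(1-s)*(\<mu> - l)\<^sup>2/(2*\<beta>)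
       = ((1-s)*(\<nu> - \<mu>)\<^sup>2 + s*(\<nu> - l)\<^sup>2 - s*(1-s)*(\<mu> - l)\<^sup>2) / (2*\<beta>)"
      using b by (simp add: diff_divide_distrib add_divide_distrib)
    also have "\<dots> = ((1-s)*(\<nu>-\<mu>) + s*(\<nu>-l))\<^sup>2 / (2*\<beta>)" using D by simp
    also have "\<dots> \<ge> 0" using b by simp
    finally show ?thesis by simp
  qed
  ultimately show ?thesis using A unfolding gs_def \<mu>_def by (simp add: algebra_simps)
qed

lemma psi_S3: assumes b: "\<beta> > 0" and s: "0 \<le> s" "s \<le> 1"
  shows "psi \<beta> ((1-s)*g + s*g') l \<ge> (1-s) * psi \<beta> g l
     + s*(muf \<beta> g l * g' + (muf \<beta> g l - l)\<^sup>2/(2*\<beta>)) - s\<^sup>2*\<beta>/2*(g' + (muf \<beta> g l - l)/\<beta>)\<^sup>2"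
proof -
  define gs where "gs = (1-s)*g + s*g'"
  define \<nu> where "\<nu> = muf \<beta> gs l"
  define \<mu> where "\<mu> = muf \<beta> g l"
  have nu0: "\<nu> \<ge> 0" unfolding \<nu>_def muf_def by simp
  have "psi \<beta> gs l = \<nu> * gs + (\<nu> - l)\<^sup>2/(2*\<beta>)" unfolding \<nu>_def by (rule psi_S1[OF b])
  also have "\<dots> = (1-s)*(\<nu>*g + (\<nu> - l)\<^sup>2/(2*\<beta>)) + s*(\<nu>*g' + (\<nu> - l)\<^sup>2/(2*\<beta>))"
    unfolding gs_def using b by (simp add: field_simps)
  finally have A: "psi \<beta> gs l = (1-s)*(\<nu>*g + (\<nu> - l)\<^sup>2/(2*\<beta>)) + s*(\<nu>*g' + (\<nu> - l)\<^sup>2/(2*\<beta>))" .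
  have B: "\<nu>*g + (\<nu> - l)\<^sup>2/(2*\<beta>) \<ge> psi \<beta> g l + (\<nu> - \<mu>)\<^sup>2/(2*\<beta>)"
    unfolding \<mu>_def by (rule psi_S2[OF b nu0])
  have B': "(1-s)*(\<nu>*g + (\<nu> - l)\<^sup>2/(2*\<beta>)) \<ge> (1-s)*(psi \<beta> g l + (\<nu> - \<mu>)\<^sup>2/(2*\<beta>))"
    using B s by (simp add: mult_left_mono)
  define c where "c = g' + (\<mu> - l)/\<beta>"
  have E: "(1-s)*((\<nu> - \<mu>)\<^sup>2/(2*\<beta>)) + s*(\<nu>*g' + (\<nu> - l)\<^sup>2/(2*\<beta>))
      - (s*(\<mu> * g' + (\<mu> - l)\<^sup>2/(2*\<beta>)) - s\<^sup>2*\<beta>/2*c\<^sup>2) = ((\<nu> - \<mu>) + s*\<beta>*c)\<^sup>2/(2*\<beta>)"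
    unfolding c_def using b by (simp add: field_simps power2_eq_square)
  have "((\<nu> - \<mu>) + s*\<beta>*c)\<^sup>2/(2*\<beta>) \<ge> 0" using b by simp
  then show ?thesis using A B' E unfolding gs_def \<mu>_def c_def by (simp add: algebra_simps)
qed

locale alm =
  fixes K :: "'v::real_vector set" and v :: "'v \<Rightarrow> real" and G :: "nat \<Rightarrow> 'v \<Rightarrow> real"
    and m :: nat and \<beta> :: real and Vs :: real and ms :: "nat \<Rightarrow> real" and y0 :: 'v
  assumes beta: "\<beta> > 0"
    and convK: "\<And>y z s. y \<in> K \<Longrightarrow> z \<in> K \<Longrightarrow> 0 \<le> s \<Longrightarrow> s \<le> 1 \<Longrightarrow> (1-s) *\<^sub>R y + s *\<^sub>R z \<in> K"
    and v_aff: "\<And>y z s. v ((1-s) *\<^sub>R y + s *\<^sub>R z) = (1-s) * v y + s * v z"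
    and G_aff: "\<And>i y z s. G i ((1-s) *\<^sub>R y + s *\<^sub>R z) = (1-s) * G i y + s * G i z"
    and maxex: "\<And>l. \<exists>y\<in>K. \<forall>z\<in>K. v z + (\<Sum>i<m. psi \<beta> (G i z) (l i)) \<le> v y + (\<Sum>i<m. psi \<beta> (G i y) (l i))"
    and y0K: "y0 \<in> K" and y0feas: "\<forall>i<m. G i y0 \<ge> 0" and y0v: "v y0 \<ge> Vs"
    and ms_nn: "\<forall>i<m. ms i \<ge> 0"
    and mult: "\<forall>z\<in>K. v z + (\<Sum>i<m. ms i * G i z) \<le> Vs"
begin

definition F where "F l y = v y + (\<Sum>i<m. psi \<beta> (G i y) (l i))"
definition Lg where "Lg y \<nu> = v y + (\<Sum>i<m. \<nu> i * G i y)"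
definition ystar where "ystar l = (SOME y. y \<in> K \<and> (\<forall>z\<in>K. F l z \<le> F l y))"
definition Dual where "Dual l = F l (ystar l)"
definition mu where "mu l y = (\<lambda>i. muf \<beta> (G i y) (l i))"
definition hv where "hv l y = (\<lambda>i. hh \<beta> (G i y) (l i))"
definition nsq where "nsq x = (\<Sum>i<m. (x i)\<^sup>2)"

lemma ystar: "ystar l \<in> K" "\<And>z. z \<in> K \<Longrightarrow> F l z \<le> F l (ystar l)"
proof -
  have "\<exists>y. y \<in> K \<and> (\<forall>z\<in>K. F l z \<le> F l y)" using maxex[of l] unfolding F_def by blast
  then have "ystar l \<in> K \<and> (\<forall>z\<in>K. F l z \<le> F l (ystar l))"
    unfolding ystar_def by (rule someI_ex)
  then show "ystar l \<in> K" "\<And>z. z \<in> K \<Longrightarrow> F l z \<le> F l (ystar l)" by auto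
qed

lemma Dual_ge: "y \<in> K \<Longrightarrow> F l y \<le> Dual l"
  unfolding Dual_def using ystar by blast

lemma mu_nn: "mu l y i \<ge> 0" unfolding mu_def muf_def by simp

lemma P1: "F l y = Lg y (mu l y) + (\<Sum>i<m. (mu l y i - l i)\<^sup>2 / (2*\<beta>))"
  unfolding F_def Lg_def mu_def using psi_S1[OF beta]
  by (simp add: sum.distrib)

lemma P2: assumes "\<forall>i<m. \<nu> i \<ge> 0"
  shows "F l y \<le> Lg y \<nu> + (\<Sum>i<m. (\<nu> i - l i)\<^sup>2 / (2*\<beta>)) - (\<Sum>i<m. (\<nu> i - mu l y i)\<^sup>2 / (2*\<beta>))"
proof -
  have "\<forall>i\<in>{..<m}. psi \<beta> (G i y) (l i) \<le> \<nu> i * G i y + (\<nu> i - l i)\<^sup>2 / (2*\<beta>) - (\<nu> i - mu l y i)\<^sup>2 / (2*\<beta>)"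
  proof
    fix i assume "i \<in> {..<m}"
    then have "\<nu> i \<ge> 0" using assms by auto
    from psi_S2[OF beta this, of "G i y" "l i"] show "psi \<beta> (G i y) (l i) \<le> \<nu> i * G i y + (\<nu> i - l i)\<^sup>2 / (2*\<beta>) - (\<nu> i - mu l y i)\<^sup>2 / (2*\<beta>)"
      unfolding mu_def by simp
  qed
  then have "(\<Sum>i<m. psi \<beta> (G i y) (l i)) \<le> (\<Sum>i<m. \<nu> i * G i y + (\<nu> i - l i)\<^sup>2 / (2*\<beta>) - (\<nu> i - mu l y i)\<^sup>2 / (2*\<beta>))"
    by (blast intro: sum_mono)
  then show ?thesis unfolding F_def Lg_def by (simp add: sum.distrib sum_subtractf)
qed

lemma P3: assumes z: "z \<in> K"
  shows "Lg z (mu l (ystar l)) \<le> Lg (ystar l) (mu l (ystar l))"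
proof -
  define y where "y = ystar l"
  define mb where "mb = mu l y"
  define Q where "Q = (\<Sum>i<m. (mb i - l i)\<^sup>2 / (2*\<beta>))"
  define Kc where "Kc = (\<Sum>i<m. \<beta>/2 * (G i z + (mb i - l i)/\<beta>)\<^sup>2)"
  have yK: "y \<in> K" unfolding y_def by (rule ystar)
  have Kc0: "Kc \<ge> 0" unfolding Kc_def using beta by (intro sum_nonneg) simp
  have key: "Lg y mb \<ge> Lg z mb - s * Kc" if s: "0 < s" "s \<le> 1" for s
  proof -
    define zs where "zs = (1-s) *\<^sub>R y + s *\<^sub>R z"
    have zsK: "zs \<in> K" unfolding zs_def using convK yK z s by simp
    have "F l zs \<le> F l y" unfolding y_def using ystar(2) zsK y_def by blast
    moreover have "F l zs \<ge> (1-s) * F l y + s * (Lg z mb + Q) - s\<^sup>2 * Kc"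
    proof -
      have "\<forall>i\<in>{..<m}. psi \<beta> (G i zs) (l i) \<ge> (1-s) * psi \<beta> (G i y) (l i)
         + s*(mb i * G i z + (mb i - l i)\<^sup>2/(2*\<beta>)) - s\<^sup>2*(\<beta>/2*(G i z + (mb i - l i)/\<beta>)\<^sup>2)"
      proof
        fix i assume "i \<in> {..<m}"
        have "psi \<beta> ((1-s)*G i y + s*G i z) (l i) \<ge> (1-s) * psi \<beta> (G i y) (l i)
         + s*(muf \<beta> (G i y) (l i) * G i z + (muf \<beta> (G i y) (l i) - l i)\<^sup>2/(2*\<beta>)) - s\<^sup>2*\<beta>/2*(G i z + (muf \<beta> (G i y) (l i) - l i)/\<beta>)\<^sup>2"
          by (rule psi_S3[OF beta]) (use s in auto)
        then show "psi \<beta> (G i zs) (l i) \<ge> (1-s) * psi \<beta> (G i y) (l i)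
         + s*(mb i * G i z + (mb i - l i)\<^sup>2/(2*\<beta>)) - s\<^sup>2*(\<beta>/2*(G i z + (mb i - l i)/\<beta>)\<^sup>2)"
          unfolding zs_def G_aff mb_def mu_def by simp
      qed
      then have A: "(\<Sum>i<m. psi \<beta> (G i zs) (l i)) \<ge> (\<Sum>i<m. (1-s) * psi \<beta> (G i y) (l i)
         + s*(mb i * G i z + (mb i - l i)\<^sup>2/(2*\<beta>)) - s\<^sup>2*(\<beta>/2*(G i z + (mb i - l i)/\<beta>)\<^sup>2))"
        by (blast intro: sum_mono)
      have B: "(\<Sum>i<m. (1-s) * psi \<beta> (G i y) (l i)
         + s*(mb i * G i z + (mb i - l i)\<^sup>2/(2*\<beta>)) - s\<^sup>2*(\<beta>/2*(G i z + (mb i - l i)/\<beta>)\<^sup>2)) = (1-s) * (\<Sum>i<m. psi \<beta> (G i y) (l i)) + s * ((\<Sum>i<m. mb i * G i z) + Q) - s\<^sup>2 * Kc"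
        unfolding Q_def Kc_def by (simp add: sum.distrib sum_subtractf sum_distrib_left distrib_left)
      from A B show ?thesis unfolding F_def Lg_def zs_def v_aff by (simp add: algebra_simps)
    qed
    ultimately have "s * F l y \<ge> s * (Lg z mb + Q) - s\<^sup>2 * Kc" by (simp add: algebra_simps)
    then have "s * F l y \<ge> s * (Lg z mb + Q - s * Kc)" by (simp add: algebra_simps power2_eq_square)
    then have "F l y \<ge> Lg z mb + Q - s * Kc" using s by simp
    moreover have "F l y = Lg y mb + Q" unfolding mb_def Q_def by (rule P1)
    ultimately show ?thesis by simp
  qed
  show ?thesis
  proof (rule ccontr)
    assume "\<not> ?thesis"
    then have d: "Lg z mb - Lg y mb > 0" unfolding mb_def y_def by simp
    define s where "s = min 1 ((Lg z mb - Lg y mb) / (Kc + 1))"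
    have s0: "s > 0" unfolding s_def using d Kc0 by simp
    have s1: "s \<le> 1" unfolding s_def by simp
    have "s * Kc \<le> (Lg z mb - Lg y mb) / (Kc + 1) * Kc"
      unfolding s_def using Kc0 by (intro mult_right_mono) auto
    also have "\<dots> < Lg z mb - Lg y mb"
    proof -
      have "(Lg z mb - Lg y mb) / (Kc + 1) * Kc = (Lg z mb - Lg y mb) * (Kc / (Kc + 1))" by simp
      also have "\<dots> < (Lg z mb - Lg y mb) * 1"
        using d Kc0 by (intro mult_strict_left_mono) auto
      finally show ?thesis by simp
    qed
    finally show False using key[OF s0 s1] by simp
  qed
qed

lemma P4: "Dual l' \<le> Lg (ystar l) (mu l (ystar l)) + (\<Sum>i<m. (mu l (ystar l) i - l' i)\<^sup>2 / (2*\<beta>))"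
proof -
  let ?mb = "mu l (ystar l)"
  have "Dual l' \<le> Lg (ystar l') ?mb + (\<Sum>i<m. (?mb i - l' i)\<^sup>2 / (2*\<beta>)) - (\<Sum>i<m. (?mb i - mu l' (ystar l') i)\<^sup>2 / (2*\<beta>))"
    unfolding Dual_def by (rule P2) (simp add: mu_nn)
  moreover have "(\<Sum>i<m. (?mb i - mu l' (ystar l') i)\<^sup>2 / (2*\<beta>)) \<ge> 0" using beta by (intro sum_nonneg) simp
  moreover have "Lg (ystar l') ?mb \<le> Lg (ystar l) ?mb" by (rule P3) (rule ystar)
  ultimately show ?thesis by linarith
qed

lemma P5: assumes "y \<in> K"
  shows "(\<Sum>i<m. (mu l (ystar l) i - mu l y i)\<^sup>2) \<le> 2*\<beta>*(Dual l - F l y)"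
proof -
  let ?mb = "mu l (ystar l)"
  have "F l y \<le> Lg y ?mb + (\<Sum>i<m. (?mb i - l i)\<^sup>2 / (2*\<beta>)) - (\<Sum>i<m. (?mb i - mu l y i)\<^sup>2 / (2*\<beta>))"
    by (rule P2) (simp add: mu_nn)
  moreover have "Lg y ?mb \<le> Lg (ystar l) ?mb" by (rule P3[OF assms])
  moreover have "Dual l = Lg (ystar l) ?mb + (\<Sum>i<m. (?mb i - l i)\<^sup>2 / (2*\<beta>))"
    unfolding Dual_def by (rule P1)
  moreover have "(\<Sum>i<m. (?mb i - mu l y i)\<^sup>2 / (2*\<beta>)) = (\<Sum>i<m. (?mb i - mu l y i)\<^sup>2) / (2*\<beta>)"
    by (simp add: sum_divide_distrib)
  ultimately have "(\<Sum>i<m. (?mb i - mu l y i)\<^sup>2) / (2*\<beta>) \<le> Dual l - F l y" by linarith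
  then show ?thesis using beta by (simp add: field_simps)
qed

end

lemma aux1: fixes L b H M S :: real shows "L = b*H + M \<Longrightarrow> ((L - S) - b/2*H)\<^sup>2 = (L - S)\<^sup>2 - 3*b\<^sup>2/4*H\<^sup>2 - b*(H*(M - S))"
  by (simp add: power2_eq_square field_simps)

lemma aux2: fixes a b c d :: real shows "a = b - c \<Longrightarrow> c = (b - d)/2 \<Longrightarrow> a = (b + d)/2"
  by argo

lemma aux4: fixes L' L M B :: real
  assumes "L' = (L + M)/2" shows "(B - L')\<^sup>2 - (B - L)\<^sup>2 \<le> (B - M)\<^sup>2 - (M - L)\<^sup>2/2"
proof -
  have "0 \<le> (B - M - (L - M)/2)\<^sup>2" by simp
  then show ?thesis unfolding assms by (simp add: power2_eq_square field_simps)
qed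

context alm begin

definition Rd where "Rd x = (\<Sum>i<m. (x i - ms i)\<^sup>2)"

lemma Dual_ge_Vs: "Dual l \<ge> Vs"
proof -
  have "(\<Sum>i<m. psi \<beta> (G i y0) (l i)) \<ge> 0"
    using psi_nonneg[OF beta] y0feas by (intro sum_nonneg) auto
  then have "F l y0 \<ge> Vs" unfolding F_def using y0v by simp
  then show ?thesis using Dual_ge[OF y0K, of l] by linarith
qed

lemma Dual_ms: "Dual ms \<le> Vs"
proof -
  have "(\<Sum>i<m. psi \<beta> (G i (ystar ms)) (ms i)) \<le> (\<Sum>i<m. ms i * G i (ystar ms))"
    using psi_le_lg[OF beta] ms_nn by (intro sum_mono) auto
  then have "Dual ms \<le> Lg (ystar ms) ms" unfolding Dual_def F_def Lg_def by simp
  also have "\<dots> \<le> Vs" using mult ystar(1) unfolding Lg_def by blast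
  finally show ?thesis .
qed

lemma sq_mu_h: "(\<Sum>i<m. (mu l y i - l i)\<^sup>2) = \<beta>\<^sup>2 * nsq (hv l y)"
proof -
  have "\<And>i. (mu l y i - l i)\<^sup>2 = \<beta>\<^sup>2 * (hv l y i)\<^sup>2"
    unfolding mu_def hv_def hh_mu[OF beta] using beta by (simp add: field_simps power2_eq_square)
  then show ?thesis unfolding nsq_def by (simp add: sum_distrib_left)
qed

lemma K1: assumes yK: "y \<in> K" and opt: "F l y \<ge> Dual l - e"
  shows "F l y \<ge> Vs + \<beta>/4 * nsq (hv l y) - 2*e"
proof -
  define zh where "zh = (1 - 1/2) *\<^sub>R y + (1/2::real) *\<^sub>R y0"
  have zhK: "zh \<in> K" unfolding zh_def using convK[OF yK y0K, of "1/2"] by simp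
  have "\<forall>i\<in>{..<m}. psi \<beta> (G i zh) (l i) \<ge> (1-1/2) * psi \<beta> (G i y) (l i) + 1/2*(1-1/2)*(mu l y i - l i)\<^sup>2/(2*\<beta>)"
  proof
    fix i assume "i \<in> {..<m}"
    then have "G i y0 \<ge> 0" using y0feas by auto
    from psi_S4[OF beta this, of "1/2" "G i y" "l i"]
    show "psi \<beta> (G i zh) (l i) \<ge> (1-1/2) * psi \<beta> (G i y) (l i) + 1/2*(1-1/2)*(mu l y i - l i)\<^sup>2/(2*\<beta>)"
      unfolding zh_def G_aff mu_def by simp
  qed
  then have "(\<Sum>i<m. psi \<beta> (G i zh) (l i)) \<ge> (\<Sum>i<m. (1-1/2) * psi \<beta> (G i y) (l i) + 1/2*(1-1/2)*(mu l y i - l i)\<^sup>2/(2*\<beta>))"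
    by (blast intro: sum_mono)
  also have "(\<Sum>i<m. (1-1/2) * psi \<beta> (G i y) (l i) + 1/2*(1-1/2)*(mu l y i - l i)\<^sup>2/(2*\<beta>))
     = 1/2 * (\<Sum>i<m. psi \<beta> (G i y) (l i)) + (\<Sum>i<m. (mu l y i - l i)\<^sup>2) / (8*\<beta>)"
    by (simp add: sum.distrib sum_distrib_left sum_divide_distrib)
  finally have A: "(\<Sum>i<m. psi \<beta> (G i zh) (l i)) \<ge> 1/2 * (\<Sum>i<m. psi \<beta> (G i y) (l i)) + \<beta>\<^sup>2 * nsq (hv l y) / (8*\<beta>)"
    unfolding sq_mu_h .
  have "\<beta>\<^sup>2 * nsq (hv l y) / (8*\<beta>) = \<beta>/8 * nsq (hv l y)" using beta by (simp add: power2_eq_square)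
  with A have A': "(\<Sum>i<m. psi \<beta> (G i zh) (l i)) \<ge> 1/2 * (\<Sum>i<m. psi \<beta> (G i y) (l i)) + \<beta>/8 * nsq (hv l y)" by simp
  have vz: "v zh = 1/2 * v y + 1/2 * v y0"
    unfolding zh_def v_aff by simp
  have Fz: "F l zh = v zh + (\<Sum>i<m. psi \<beta> (G i zh) (l i))" unfolding F_def by simp
  have Fy: "F l y = v y + (\<Sum>i<m. psi \<beta> (G i y) (l i))" unfolding F_def by simp
  have "1/2 * F l y + 1/2 * Vs + \<beta>/8 * nsq (hv l y) \<le> 1/2 * F l y + 1/2 * v y0 + \<beta>/8 * nsq (hv l y)"
    using y0v by simp
  also have "\<dots> = 1/2 * v y + 1/2 * v y0 + (1/2 * (\<Sum>i<m. psi \<beta> (G i y) (l i)) + \<beta>/8 * nsq (hv l y))"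
    unfolding Fy by (simp add: algebra_simps)
  also have "\<dots> \<le> 1/2 * v y + 1/2 * v y0 + (\<Sum>i<m. psi \<beta> (G i zh) (l i))"
    using A' by simp
  also have "\<dots> = F l zh" unfolding Fz vz by simp
  finally have "F l zh \<ge> 1/2 * F l y + 1/2 * Vs + \<beta>/8 * nsq (hv l y)" .
  moreover have "F l zh \<le> Dual l" by (rule Dual_ge[OF zhK])
  ultimately show ?thesis using opt by simp
qed

lemma F2: assumes yK: "y \<in> K" and opt: "F l y \<ge> Dual l - e"
  shows "\<beta>/4 * nsq (hv l y) \<le> Dual l - Vs + 2*e"
  using K1[OF assms] Dual_ge[OF yK, of l] by linarith

lemma e_nn: assumes yK: "y \<in> K" and opt: "F l y \<ge> Dual l - e" shows "e \<ge> 0"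
  using Dual_ge[OF yK, of l] opt by linarith

lemma hv_le: "hv l y i \<le> G i y" unfolding hv_def hh_def by simp
lemma hv_mu: "hv l y i * mu l y i = G i y * mu l y i"
proof (cases "mu l y i = 0")
  case False
  then have "l i - \<beta> * G i y > 0" unfolding mu_def muf_def by (auto simp: max_def split: if_splits)
  then have "G i y < l i / \<beta>" using beta by (simp add: field_simps)
  then show ?thesis unfolding hv_def hh_def by simp
qed simp

lemma F1: assumes yK: "y \<in> K" and opt: "F l y \<ge> Dual l - e"
  and upd: "\<forall>i<m. l' i = l i - \<beta>/2 * hv l y i"
  shows "Rd l' \<le> Rd l - \<beta>\<^sup>2/2 * nsq (hv l y) + 2*\<beta>*e"
proof -
  let ?h = "hv l y" and ?mu = "mu l y"
  have FL: "F l y = Lg y ?mu + (\<Sum>i<m. (?mu i - l i)\<^sup>2) / (2*\<beta>)"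
    using P1[of l y] by (simp add: sum_divide_distrib)
  have "(\<Sum>i<m. (?mu i - l i)\<^sup>2) / (2*\<beta>) = \<beta>/2 * nsq ?h"
    unfolding sq_mu_h using beta by (simp add: power2_eq_square)
  with FL K1[OF yK opt] have L1: "Lg y ?mu \<ge> Vs - \<beta>/4 * nsq ?h - 2*e" by simp
  have "(\<Sum>i<m. ?h i * (?mu i - ms i)) \<ge> (\<Sum>i<m. G i y * ?mu i - G i y * ms i)"
  proof (intro sum_mono)
    fix i assume "i \<in> {..<m}"
    then have "ms i \<ge> 0" using ms_nn by auto
    then have a: "?h i * ms i \<le> G i y * ms i" using hv_le by (simp add: mult_right_mono)
    have b: "?h i * ?mu i = G i y * ?mu i" by (rule hv_mu)
    have c: "?h i * (?mu i - ms i) = ?h i * ?mu i - ?h i * ms i" by (simp add: right_diff_distrib)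
    show "G i y * ?mu i - G i y * ms i \<le> ?h i * (?mu i - ms i)"
      using a b c by linarith
  qed
  also have "(\<Sum>i<m. G i y * ?mu i - G i y * ms i) = Lg y ?mu - Lg y ms"
    unfolding Lg_def by (simp add: sum_subtractf mult.commute)
  finally have "(\<Sum>i<m. ?h i * (?mu i - ms i)) \<ge> Lg y ?mu - Lg y ms" .
  moreover have "Lg y ms \<le> Vs" using mult yK unfolding Lg_def by blast
  ultimately have H: "(\<Sum>i<m. ?h i * (?mu i - ms i)) \<ge> - \<beta>/4 * nsq ?h - 2*e" using L1 by simp
  have coord: "(l' i - ms i)\<^sup>2 = (l i - ms i)\<^sup>2 - 3*\<beta>\<^sup>2/4 * (?h i)\<^sup>2 - \<beta> * (?h i * (?mu i - ms i))" if "i < m" for i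
  proof -
    have li: "l i = \<beta> * ?h i + ?mu i" unfolding hv_def mu_def hh_mu[OF beta] using beta by simp
    have d: "l' i - ms i = (l i - ms i) - \<beta>/2 * ?h i" using upd that by simp
    have e: "((l i - ms i) - \<beta>/2 * ?h i)\<^sup>2 = (l i - ms i)\<^sup>2 - \<beta> * ?h i * (l i - ms i) + \<beta>\<^sup>2/4 * (?h i)\<^sup>2"
      by (simp add: power2_eq_square field_simps)
    have f: "\<beta> * ?h i * (l i - ms i) = \<beta>\<^sup>2 * (?h i)\<^sup>2 + \<beta> * (?h i * (?mu i - ms i))"
      by (subst li) (simp add: power2_eq_square algebra_simps)
    show ?thesis unfolding d using aux1[OF li] by simp
  qed
  have "Rd l' = (\<Sum>i<m. (l i - ms i)\<^sup>2 - 3*\<beta>\<^sup>2/4 * (?h i)\<^sup>2 - \<beta> * (?h i * (?mu i - ms i)))"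
    unfolding Rd_def using coord by (intro sum.cong) auto
  also have "\<dots> = Rd l - 3*\<beta>\<^sup>2/4 * nsq ?h - \<beta> * (\<Sum>i<m. ?h i * (?mu i - ms i))"
    unfolding Rd_def nsq_def by (simp add: sum_subtractf sum_distrib_left)
  finally have R: "Rd l' = Rd l - 3*\<beta>\<^sup>2/4 * nsq ?h - \<beta> * (\<Sum>i<m. ?h i * (?mu i - ms i))" .
  have "\<beta> * (- \<beta>/4 * nsq ?h - 2*e) \<le> \<beta> * (\<Sum>i<m. ?h i * (?mu i - ms i))"
    using H beta by (intro mult_left_mono) auto
  then have "- \<beta>\<^sup>2/4 * nsq ?h - 2*\<beta>*e \<le> \<beta> * (\<Sum>i<m. ?h i * (?mu i - ms i))"
    by (simp add: algebra_simps power2_eq_square)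
  then show ?thesis using R by (simp add: algebra_simps power2_eq_square)
qed

lemma F5: assumes upd: "\<forall>i<m. l' i = l i - \<beta>/2 * hv l y i"
  shows "Rd l' = Rd l - \<beta> * (\<Sum>i<m. hv l y i * (l i - ms i)) + \<beta>\<^sup>2/4 * nsq (hv l y)"
proof -
  have "Rd l' = (\<Sum>i<m. (l i - ms i)\<^sup>2 - \<beta> * (hv l y i * (l i - ms i)) + \<beta>\<^sup>2/4 * (hv l y i)\<^sup>2)"
    unfolding Rd_def
  proof (intro sum.cong refl)
    fix i assume "i \<in> {..<m}"
    then have d: "l' i - ms i = (l i - ms i) - \<beta>/2 * hv l y i" using upd by auto
    have e: "((l i - ms i) - \<beta>/2 * hv l y i)\<^sup>2 = (l i - ms i)\<^sup>2 - \<beta> * (hv l y i * (l i - ms i)) + \<beta>\<^sup>2/4 * (hv l y i)\<^sup>2"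
      by (simp add: power2_eq_square field_simps)
    show "(l' i - ms i)\<^sup>2 = (l i - ms i)\<^sup>2 - \<beta> * (hv l y i * (l i - ms i)) + \<beta>\<^sup>2/4 * (hv l y i)\<^sup>2"
      unfolding d by (rule e)
  qed
  then show ?thesis unfolding Rd_def nsq_def by (simp add: sum.distrib sum_subtractf sum_distrib_left)
qed

lemma F4: assumes yK: "y \<in> K" and opt: "F l y \<ge> Dual l - e"
  shows "Dual l - Vs \<le> e + (\<Sum>i<m. hv l y i * (l i - ms i))"
proof -
  have "F ms y \<ge> F l y + (\<Sum>i<m. hv l y i * (ms i - l i))"
  proof -
    have "(\<Sum>i<m. psi \<beta> (G i y) (ms i)) \<ge> (\<Sum>i<m. psi \<beta> (G i y) (l i) + hv l y i * (ms i - l i))"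
      unfolding hv_def using psi_convex_l[OF beta] by (intro sum_mono) auto
    then show ?thesis unfolding F_def by (simp add: sum.distrib)
  qed
  moreover have "F ms y \<le> Vs" using Dual_ge[OF yK, of ms] Dual_ms by simp
  moreover have "(\<Sum>i<m. hv l y i * (ms i - l i)) = - (\<Sum>i<m. hv l y i * (l i - ms i))"
    by (simp add: sum_negf[symmetric] algebra_simps)
  ultimately show ?thesis using opt by simp
qed

lemma F3: assumes yK: "y \<in> K" and opt: "F l y \<ge> Dual l - e"
  and upd: "\<forall>i<m. l' i = l i - \<beta>/2 * hv l y i"
  shows "Dual l' \<le> Dual l - \<beta>/4 * nsq (hv l y) + e"
proof -
  let ?mb = "mu l (ystar l)" and ?mu = "mu l y" and ?h = "hv l y"
  have A: "Dual l' \<le> Lg (ystar l) ?mb + (\<Sum>i<m. (?mb i - l' i)\<^sup>2) / (2*\<beta>)"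
    using P4[of l' l] by (simp add: sum_divide_distrib)
  have B: "Dual l = Lg (ystar l) ?mb + (\<Sum>i<m. (?mb i - l i)\<^sup>2) / (2*\<beta>)"
    unfolding Dual_def using P1[of l "ystar l"] by (simp add: sum_divide_distrib)
  have C: "(\<Sum>i<m. (?mb i - ?mu i)\<^sup>2) \<le> 2*\<beta>*e" using P5[OF yK, of l] opt beta
    by (smt (verit) mult_left_mono)
  have coord: "(?mb i - l' i)\<^sup>2 - (?mb i - l i)\<^sup>2 \<le> (?mb i - ?mu i)\<^sup>2 - (?mu i - l i)\<^sup>2 / 2" if "i < m" for i
  proof -
    have "l' i = l i - \<beta>/2 * hv l y i" using upd that by simp
    moreover have "\<beta>/2 * hv l y i = (l i - ?mu i)/2" unfolding hv_def mu_def hh_mu[OF beta] using beta by simp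
    ultimately have "l' i = (l i + ?mu i)/2" by (rule aux2)
    then show ?thesis by (rule aux4)
  qed
  have "(\<Sum>i<m. (?mb i - l' i)\<^sup>2) - (\<Sum>i<m. (?mb i - l i)\<^sup>2) \<le> (\<Sum>i<m. (?mb i - ?mu i)\<^sup>2) - (\<Sum>i<m. (?mu i - l i)\<^sup>2) / 2"
  proof -
    have "(\<Sum>i<m. (?mb i - l' i)\<^sup>2 - (?mb i - l i)\<^sup>2) \<le> (\<Sum>i<m. (?mb i - ?mu i)\<^sup>2 - (?mu i - l i)\<^sup>2 / 2)"
      using coord by (intro sum_mono) auto
    then show ?thesis by (simp add: sum_subtractf sum_divide_distrib)
  qed
  also have "\<dots> \<le> 2*\<beta>*e - \<beta>\<^sup>2 * nsq ?h / 2" using C unfolding sq_mu_h by simp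
  finally have D: "(\<Sum>i<m. (?mb i - l' i)\<^sup>2) - (\<Sum>i<m. (?mb i - l i)\<^sup>2) \<le> 2*\<beta>*e - \<beta>\<^sup>2 * nsq ?h / 2" .
  have "Dual l' - Dual l \<le> ((\<Sum>i<m. (?mb i - l' i)\<^sup>2) - (\<Sum>i<m. (?mb i - l i)\<^sup>2)) / (2*\<beta>)"
    using A B by (simp add: diff_divide_distrib)
  also have "\<dots> \<le> (2*\<beta>*e - \<beta>\<^sup>2 * nsq ?h / 2) / (2*\<beta>)"
    using D beta by (simp add: divide_right_mono)
  also have "\<dots> = e - \<beta>/4 * nsq ?h" using beta by (simp add: field_simps power2_eq_square)
  finally show ?thesis by simp
qed

lemma F6: assumes yK: "y \<in> K" and opt: "F l y \<ge> Dual l - e"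
  and upd: "\<forall>i<m. l' i = l i - \<beta>/2 * hv l y i"
  shows "Dual l' - Vs \<le> 2*e + (Rd l - Rd l')/\<beta>"
proof -
  have a: "Dual l' \<le> Dual l - \<beta>/4 * nsq (hv l y) + e" by (rule F3[OF assms])
  have b: "Dual l - Vs \<le> e + (\<Sum>i<m. hv l y i * (l i - ms i))" by (rule F4[OF yK opt])
  have c: "Rd l' = Rd l - \<beta> * (\<Sum>i<m. hv l y i * (l i - ms i)) + \<beta>\<^sup>2/4 * nsq (hv l y)" by (rule F5[OF upd])
  have "(Rd l - Rd l')/\<beta> = (\<Sum>i<m. hv l y i * (l i - ms i)) - \<beta>/4 * nsq (hv l y)"
    using c beta by (simp add: field_simps power2_eq_square)
  then show ?thesis using a b by simp
qed

end

lemma sum_inv_sq_aux: assumes k: "1 \<le> k" and kn: "k \<le> n"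
  shows "(\<Sum>j\<in>{k..<n}. 1/(real j)\<^sup>2) \<le> 2/real k - 2/real n"
  using kn
proof (induction n rule: dec_induct)
  case base then show ?case by simp
next
  case (step n)
  have n1: "real n \<ge> 1" using step k by simp
  have "1/(real n)\<^sup>2 \<le> 2/real n - 2/real (Suc n)"
  proof -
    have "2/real n - 2/real (Suc n) = 2 / (real n * (real n + 1))" using n1 by (simp add: field_simps)
    moreover have "1/(real n)\<^sup>2 \<le> 2 / (real n * (real n + 1))"
    proof -
      have a: "real n * 1 \<le> real n * real n" using n1 by (intro mult_left_mono) auto
      have "1/(real n)\<^sup>2 = 2 / (2 * (real n)\<^sup>2)" by simp
      also have "\<dots> \<le> 2 / (real n * (real n + 1))"
        apply (rule divide_left_mono)
        using a n1 by (auto simp: power2_eq_square algebra_simps intro!: add_pos_pos mult_pos_pos)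
      finally show ?thesis .
    qed
    ultimately show ?thesis by simp
  qed
  then show ?case using step by (simp add: sum.atLeastLessThan_Suc[OF step.hyps(1)])
qed

lemma sum_inv_sq: assumes k: "1 \<le> k"
  shows "(\<Sum>j\<in>{k..<n}. 1/(real j)\<^sup>2) \<le> 2/real k"
proof (cases "k \<le> n")
  case True
  then show ?thesis using sum_inv_sq_aux[OF k True] by (smt (verit) divide_nonneg_nonneg of_nat_0_le_iff)
next
  case False then show ?thesis by simp
qed

lemma sum_eps_bound: assumes k: "1 \<le> k" and e: "\<forall>t\<ge>1. eps t \<le> C1 / (real t)\<^sup>2" and C1: "C1 \<ge> 0"
  shows "(\<Sum>j\<in>{k..<n}. eps j) \<le> 2*C1/real k"
proof -
  have "(\<Sum>j\<in>{k..<n}. eps j) \<le> (\<Sum>j\<in>{k..<n}. C1 * (1/(real j)\<^sup>2))"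
    using e k by (intro sum_mono) auto
  also have "\<dots> = C1 * (\<Sum>j\<in>{k..<n}. 1/(real j)\<^sup>2)" by (simp add: sum_distrib_left)
  also have "\<dots> \<le> C1 * (2/real k)" using sum_inv_sq[OF k] C1 by (intro mult_left_mono) auto
  finally show ?thesis by (simp add: mult.commute)
qed

lemma xy_le: fixes x y a :: real assumes "a > 0" shows "x * y \<le> a * x\<^sup>2 + y\<^sup>2 / (4*a)"
proof -
  have "0 \<le> (2*a*x - y)\<^sup>2 / (4*a)" using assms by simp
  also have "(2*a*x - y)\<^sup>2 / (4*a) = a * x\<^sup>2 + y\<^sup>2 / (4*a) - x * y"
    using assms by (simp add: field_simps power2_eq_square)
  finally show ?thesis by simp
qed

context alm begin

lemma Rd_nn: "Rd x \<ge> 0" unfolding Rd_def by (intro sum_nonneg) simp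
lemma nsq_nn: "nsq (x::nat\<Rightarrow>real) \<ge> 0" unfolding nsq_def by (simp add: sum_nonneg)

lemma nsq_le: "nsq (x::nat\<Rightarrow>real) \<le> 2 * nsq ms + 2 * Rd x"
proof -
  have "\<And>i. (x i)\<^sup>2 \<le> 2 * (ms i)\<^sup>2 + 2 * (x i - ms i)\<^sup>2"
  proof -
    fix i
    have "0 \<le> (x i - 2 * ms i)\<^sup>2" by simp
    then show "(x i)\<^sup>2 \<le> 2 * (ms i)\<^sup>2 + 2 * (x i - ms i)\<^sup>2" by (simp add: power2_eq_square algebra_simps)
  qed
  then have "nsq x \<le> (\<Sum>i<m. 2 * (ms i)\<^sup>2 + 2 * (x i - ms i)\<^sup>2)" unfolding nsq_def by (intro sum_mono) auto
  then show ?thesis unfolding nsq_def Rd_def by (simp add: sum.distrib sum_distrib_left)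
qed

end

context alm begin

lemma conv:
  assumes C1: "C1 \<ge> 0" and e: "\<forall>t\<ge>1. eps t \<le> C1/(real t)\<^sup>2" and T2: "T \<ge> 2"
    and l1: "\<forall>i<m. lam 1 i = 0"
    and it: "\<forall>t\<in>{1..T}. ys (t+1) \<in> K \<and> F (lam t) (ys (t+1)) \<ge> Dual (lam t) - eps t
          \<and> (\<forall>i<m. lam (t+1) i = lam t i - \<beta>/2 * hv (lam t) (ys (t+1)) i)"
  shows "nsq (hv (lam T) (ys (T+1))) \<le> 4/\<beta>*((40*C1 + 2*(nsq ms + 4*\<beta>*C1)/\<beta>) + 2*C1) / real T"
    and "Rd (lam T) \<le> nsq ms + 4*\<beta>*C1"
proof -
  define Rb where "Rb = nsq ms + 4*\<beta>*C1"
  have yK: "\<And>t. 1 \<le> t \<Longrightarrow> t \<le> T \<Longrightarrow> ys (t+1) \<in> K" using it by auto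
  have opt: "\<And>t. 1 \<le> t \<Longrightarrow> t \<le> T \<Longrightarrow> F (lam t) (ys (t+1)) \<ge> Dual (lam t) - eps t" using it by auto
  have upd: "\<And>t. 1 \<le> t \<Longrightarrow> t \<le> T \<Longrightarrow> \<forall>i<m. lam (t+1) i = lam t i - \<beta>/2 * hv (lam t) (ys (t+1)) i"
    using it by auto
  have enn: "\<And>t. 1 \<le> t \<Longrightarrow> t \<le> T \<Longrightarrow> eps t \<ge> 0" using e_nn yK opt by blast
  have Rstep: "Rd (lam (t+1)) \<le> Rd (lam t) + 2*\<beta>*eps t" if "1 \<le> t" "t \<le> T" for t
  proof -
    have "Rd (lam (t+1)) \<le> Rd (lam t) - \<beta>\<^sup>2/2 * nsq (hv (lam t) (ys (t+1))) + 2*\<beta>*eps t"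
      by (rule F1[OF yK[OF that] opt[OF that] upd[OF that]])
    moreover have "\<beta>\<^sup>2/2 * nsq (hv (lam t) (ys (t+1))) \<ge> 0" using nsq_nn by simp
    ultimately show ?thesis by simp
  qed
  have R1: "Rd (lam 1) = nsq ms" unfolding Rd_def nsq_def using l1 by (intro sum.cong) auto
  have Rsum: "Rd (lam t) \<le> nsq ms + 2*\<beta>*(\<Sum>j\<in>{1..<t}. eps j)" if "1 \<le> t" "t \<le> T+1" for t
    using that
  proof (induction t rule: dec_induct)
    case base then show ?case using R1 by simp
  next
    case (step t)
    have "Rd (lam (Suc t)) \<le> Rd (lam t) + 2*\<beta>*eps t" using Rstep[of t] step by simp
    also have "\<dots> \<le> nsq ms + 2*\<beta>*(\<Sum>j\<in>{1..<t}. eps j) + 2*\<beta>*eps t" using step by simp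
    also have "\<dots> = nsq ms + 2*\<beta>*(\<Sum>j\<in>{1..<Suc t}. eps j)"
      using step by (simp add: sum.atLeastLessThan_Suc distrib_left)
    finally show ?case .
  qed
  have Rb: "Rd (lam t) \<le> Rb" if "1 \<le> t" "t \<le> T+1" for t
  proof -
    have "(\<Sum>j\<in>{1..<t}. eps j) \<le> 2*C1/real (1::nat)" by (rule sum_eps_bound[OF _ e C1]) simp
    then have "2*\<beta>*(\<Sum>j\<in>{1..<t}. eps j) \<le> 2*\<beta>*(2*C1)" using beta by (intro mult_left_mono) auto
    then have X: "2*\<beta>*(\<Sum>j\<in>{1..<t}. eps j) \<le> 4*\<beta>*C1" by (simp add: algebra_simps)
    show ?thesis using order_trans[OF Rsum[OF that] add_left_mono[OF X]] unfolding Rb_def .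
  qed
  show "Rd (lam T) \<le> nsq ms + 4*\<beta>*C1" using Rb[of T] T2 unfolding Rb_def by simp
  have Dmono: "Dual (lam t) \<le> Dual (lam k) + (\<Sum>j\<in>{k..<t}. eps j)" if "1 \<le> k" "k \<le> t" "t \<le> T+1" for k t
    using that(2,3)
  proof (induction t rule: dec_induct)
    case base then show ?case by simp
  next
    case (step t)
    have "Dual (lam (Suc t)) \<le> Dual (lam t) - \<beta>/4 * nsq (hv (lam t) (ys (t+1))) + eps t"
      using F3[OF yK opt upd, of t] step that by simp
    moreover have "\<beta>/4 * nsq (hv (lam t) (ys (t+1))) \<ge> 0" using nsq_nn beta by simp
    ultimately show ?case using step by (simp add: sum.atLeastLessThan_Suc)
  qed
  have Tele: "(\<Sum>t\<in>{k..<n}. Dual (lam (t+1)) - Vs) \<le> 2*(\<Sum>t\<in>{k..<n}. eps t) + (Rd (lam k) - Rd (lam n))/\<beta>"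
    if "1 \<le> k" "k \<le> n" "n \<le> T" for k n
    using that(2,3)
  proof (induction n rule: dec_induct)
    case base then show ?case by simp
  next
    case (step n)
    have "Dual (lam (n+1)) - Vs \<le> 2*eps n + (Rd (lam n) - Rd (lam (n+1)))/\<beta>"
      using F6[OF yK opt upd, of n] step that by simp
    moreover have "(Rd (lam k) - Rd (lam n))/\<beta> + (Rd (lam n) - Rd (lam (n+1)))/\<beta> = (Rd (lam k) - Rd (lam (n+1)))/\<beta>"
      by (simp add: diff_divide_distrib)
    ultimately show ?case using step by (simp add: sum.atLeastLessThan_Suc)
  qed
  define k where "k = T div 2"
  have k1: "1 \<le> k" and kT: "k < T" using T2 unfolding k_def by auto
  have k4: "real T \<le> 4 * real k" using T2 unfolding k_def by linarith
  have N2: "real T / 2 \<le> real (T - k)" using T2 kT unfolding k_def by linarith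
  define \<tau> where "\<tau> = real T"
  have tau1: "\<tau> \<ge> 1" unfolding \<tau>_def using T2 by simp
  define E where "E = (\<Sum>j\<in>{k..<T}. eps j)"
  have E0: "E \<ge> 0" unfolding E_def using enn k1 kT by (intro sum_nonneg) auto
  have E1: "E \<le> 8*C1/\<tau>"
  proof -
    have "E \<le> 2*C1/real k" unfolding E_def by (rule sum_eps_bound[OF k1 e C1])
    also have "2*C1/real k = 8*C1/(4*real k)" by simp
    also have "\<dots> \<le> 8*C1/\<tau>" unfolding \<tau>_def
      apply (rule divide_left_mono) using k4 C1 k1 T2 by auto
    finally show ?thesis .
  qed
  define S where "S = (\<Sum>t\<in>{k..<T}. Dual (lam (t+1)) - Vs)"
  have S1: "S \<le> 2*E + Rb/\<beta>"
  proof -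
    have "S \<le> 2*E + (Rd (lam k) - Rd (lam T))/\<beta>" unfolding S_def E_def using Tele[OF k1] kT by simp
    moreover have "(Rd (lam k) - Rd (lam T))/\<beta> \<le> Rb/\<beta>"
      using Rb[of k] k1 kT Rd_nn[of "lam T"] beta by (intro divide_right_mono) auto
    ultimately show ?thesis by simp
  qed
  define DT where "DT = Dual (lam T) - Vs"
  have each: "DT \<le> (Dual (lam (t+1)) - Vs) + E" if "t \<in> {k..<T}" for t
  proof -
    have "Dual (lam T) \<le> Dual (lam (t+1)) + (\<Sum>j\<in>{t+1..<T}. eps j)"
      using Dmono[of "t+1" T] that by simp
    moreover have "(\<Sum>j\<in>{t+1..<T}. eps j) \<le> E" unfolding E_def
      using that enn k1 by (intro sum_mono2) auto
    ultimately show ?thesis unfolding DT_def by simp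
  qed
  have "real (T - k) * DT = (\<Sum>t\<in>{k..<T}. DT)" by simp
  also have "\<dots> \<le> (\<Sum>t\<in>{k..<T}. (Dual (lam (t+1)) - Vs) + E)" using each by (intro sum_mono) auto
  also have "\<dots> = S + real (T - k) * E" unfolding S_def by (simp add: sum.distrib)
  finally have NT: "real (T - k) * DT \<le> S + real (T - k) * E" .
  define N where "N = real (T - k)"
  have Npos: "N > 0" unfolding N_def using kT by simp
  have "N * (DT - E) \<le> 2*E + Rb/\<beta>" using NT S1 unfolding N_def by (simp add: algebra_simps)
  then have "DT - E \<le> (2*E + Rb/\<beta>)/N" using Npos by (simp add: pos_le_divide_eq mult.commute)
  also have "\<dots> \<le> (2*E + Rb/\<beta>)/(\<tau>/2)"
  proof (rule divide_left_mono)
    have "Rb \<ge> 0" unfolding Rb_def using nsq_nn beta C1 by simp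
    then show "0 \<le> 2*E + Rb/\<beta>" using E0 beta by simp
    show "\<tau>/2 \<le> N" using N2 unfolding N_def \<tau>_def .
    show "0 < N * (\<tau>/2)" using Npos tau1 by simp
  qed
  also have "\<dots> = 2*(2*E + Rb/\<beta>)/\<tau>" by simp
  also have "\<dots> \<le> 2*(16*C1 + Rb/\<beta>)/\<tau>"
  proof -
    have "2*E \<le> 16*C1/\<tau>" using E1 by simp
    also have "\<dots> \<le> 16*C1" using tau1 C1 by (simp add: divide_le_eq mult_le_cancel_left1)
    finally have "2*(2*E + Rb/\<beta>) \<le> 2*(16*C1 + Rb/\<beta>)" by simp
    then show ?thesis using tau1 by (simp add: divide_right_mono)
  qed
  finally have DT1: "DT \<le> 2*(16*C1 + Rb/\<beta>)/\<tau> + E" by simp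
  have DT2: "DT \<le> (40*C1 + 2*Rb/\<beta>)/\<tau>"
  proof -
    have "2*(16*C1 + Rb/\<beta>)/\<tau> + 8*C1/\<tau> = (40*C1 + 2*Rb/\<beta>)/\<tau>" using tau1 by (simp add: field_simps)
    then show ?thesis using DT1 E1 by simp
  qed
  have eT: "eps T \<le> C1/\<tau>"
  proof -
    have "eps T \<le> C1/\<tau>\<^sup>2" using e T2 unfolding \<tau>_def by simp
    also have "\<dots> \<le> C1/\<tau>" using tau1 C1 by (intro divide_left_mono) (auto simp: power2_eq_square)
    finally show ?thesis .
  qed
  have "\<beta>/4 * nsq (hv (lam T) (ys (T+1))) \<le> DT + 2*eps T"
    unfolding DT_def using F2[OF yK opt, of T] T2 by simp
  also have "\<dots> \<le> (40*C1 + 2*Rb/\<beta>)/\<tau> + 2*(C1/\<tau>)" using DT2 eT by simp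
  also have "\<dots> = ((40*C1 + 2*Rb/\<beta>) + 2*C1)/\<tau>" using tau1 by (simp add: field_simps)
  finally have "\<beta>/4 * nsq (hv (lam T) (ys (T+1))) \<le> ((40*C1 + 2*Rb/\<beta>) + 2*C1)/\<tau>" .
  then have P: "4/\<beta> * (\<beta>/4 * nsq (hv (lam T) (ys (T+1)))) \<le> 4/\<beta> * (((40*C1 + 2*Rb/\<beta>) + 2*C1)/\<tau>)"
    using beta by (intro mult_left_mono) auto
  have Q: "4/\<beta> * (\<beta>/4 * nsq (hv (lam T) (ys (T+1)))) = nsq (hv (lam T) (ys (T+1)))" using beta by simp
  have "nsq (hv (lam T) (ys (T+1))) \<le> 4/\<beta> * (((40*C1 + 2*Rb/\<beta>) + 2*C1)/\<tau>)" using P by (simp only: Q)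
  then show "nsq (hv (lam T) (ys (T+1))) \<le> 4/\<beta>*((40*C1 + 2*(nsq ms + 4*\<beta>*C1)/\<beta>) + 2*C1) / real T"
    unfolding Rb_def \<tau>_def by (simp only: times_divide_eq_right)
qed

end

context alm begin

lemma main:
  assumes C1: "C1 > 0"
  shows "\<exists>C2>0. \<forall>\<epsilon> (eps::nat\<Rightarrow>real) (T::nat) (lam::nat \<Rightarrow> nat \<Rightarrow> real) (ys::nat \<Rightarrow> 'v).
     0 < \<epsilon> \<and> \<epsilon> < 1 \<and> (\<forall>t\<ge>1. eps t \<le> C1/(real t)\<^sup>2) \<and> real T \<ge> C2/\<epsilon>\<^sup>2 \<and> (\<forall>i<m. lam 1 i = 0)
     \<and> (\<forall>t\<in>{1..T}. ys (t+1) \<in> K \<and> F (lam t) (ys (t+1)) \<ge> Dual (lam t) - eps t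
          \<and> (\<forall>i<m. lam (t+1) i = lam t i - \<beta>/2 * hh \<beta> (G i (ys (t+1))) (lam t i)))
     \<longrightarrow> v (ys (T+1)) \<ge> Vs - \<epsilon> \<and> (\<forall>i<m. G i (ys (T+1)) \<ge> -\<epsilon>)"
proof -
  define Rb where "Rb = nsq ms + 4*\<beta>*C1"
  define B where "B = 4/\<beta>*((40*C1 + 2*(nsq ms + 4*\<beta>*C1)/\<beta>) + 2*C1)"
  define \<Lambda> where "\<Lambda> = 2 * nsq ms + 2 * Rb + 1"
  define C2 where "C2 = 2 + B + 4*(\<Lambda>*B + C1)"
  have Rb0: "Rb \<ge> 0" unfolding Rb_def using nsq_nn[of ms] beta C1 by simp
  have B0: "B \<ge> 0" unfolding B_def using nsq_nn[of ms] beta C1 by simp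
  have L0: "\<Lambda> \<ge> 1" unfolding \<Lambda>_def using nsq_nn[of ms] Rb0 by simp
  have LB0: "\<Lambda>*B \<ge> 0" using L0 B0 by simp
  have C2pos: "C2 > 0" unfolding C2_def using B0 LB0 C1 by simp
  show ?thesis
  proof (rule exI[of _ C2], rule conjI[OF C2pos], intro allI impI)
    fix \<epsilon> :: real and eps :: "nat \<Rightarrow> real" and T :: nat and lam :: "nat \<Rightarrow> nat \<Rightarrow> real" and ys :: "nat \<Rightarrow> 'v"
    assume H: "0 < \<epsilon> \<and> \<epsilon> < 1 \<and> (\<forall>t\<ge>1. eps t \<le> C1/(real t)\<^sup>2) \<and> real T \<ge> C2/\<epsilon>\<^sup>2 \<and> (\<forall>i<m. lam 1 i = 0)
     \<and> (\<forall>t\<in>{1..T}. ys (t+1) \<in> K \<and> F (lam t) (ys (t+1)) \<ge> Dual (lam t) - eps t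
          \<and> (\<forall>i<m. lam (t+1) i = lam t i - \<beta>/2 * hh \<beta> (G i (ys (t+1))) (lam t i)))"
    have ep: "0 < \<epsilon>" "\<epsilon> < 1" using H by auto
    have e: "\<forall>t\<ge>1. eps t \<le> C1/(real t)\<^sup>2" using H by auto
    have TC: "real T \<ge> C2/\<epsilon>\<^sup>2" using H by auto
    have l1: "\<forall>i<m. lam 1 i = 0" using H by auto
    have it: "\<forall>t\<in>{1..T}. ys (t+1) \<in> K \<and> F (lam t) (ys (t+1)) \<ge> Dual (lam t) - eps t
          \<and> (\<forall>i<m. lam (t+1) i = lam t i - \<beta>/2 * hv (lam t) (ys (t+1)) i)"
      using H unfolding hv_def by auto
    have e2: "\<epsilon>\<^sup>2 \<le> 1" using ep by (simp add: power_le_one)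
    have e2p: "\<epsilon>\<^sup>2 > 0" using ep by simp
    have "C2 \<le> C2/\<epsilon>\<^sup>2" using C2pos e2 e2p by (simp add: le_divide_eq)
    then have TC2: "real T \<ge> C2" using TC by simp
    then have T2: "T \<ge> 2" unfolding C2_def using B0 LB0 C1 by simp
    have Tpos: "real T > 0" using T2 by simp
    have invT: "1 / real T \<le> \<epsilon>\<^sup>2 / C2"
    proof -
      have "C2 \<le> real T * \<epsilon>\<^sup>2" using TC e2p by (simp add: divide_le_eq)
      then show ?thesis using Tpos C2pos by (simp add: field_simps)
    qed
    define l where "l = lam T"
    define y where "y = ys (T+1)"
    define h where "h = hv l y"
    have yK: "y \<in> K" and opt: "F l y \<ge> Dual l - eps T" using it T2 unfolding l_def y_def by auto
    have nh: "nsq h \<le> B / real T" using conv(1)[OF _ e T2 l1 it] C1 unfolding h_def l_def y_def B_def by simp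
    have Rl: "Rd l \<le> Rb" using conv(2)[OF _ e T2 l1 it] C1 unfolding l_def Rb_def by simp
    have nh2: "nsq h \<le> B * \<epsilon>\<^sup>2 / C2"
    proof -
      have "B / real T = B * (1 / real T)" by simp
      also have "\<dots> \<le> B * (\<epsilon>\<^sup>2 / C2)" using invT B0 by (intro mult_left_mono) auto
      finally show ?thesis using nh by simp
    qed
    have nh3: "nsq h \<le> \<epsilon>\<^sup>2"
    proof -
      have "B * \<epsilon>\<^sup>2 / C2 \<le> C2 * \<epsilon>\<^sup>2 / C2"
        using B0 e2p C2pos unfolding C2_def using LB0 C1 by (intro divide_right_mono mult_right_mono) auto
      then show ?thesis using nh2 C2pos by simp
    qed
    have cons: "\<forall>i<m. G i y \<ge> -\<epsilon>"
    proof (intro allI impI)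
      fix i assume i: "i < m"
      have "(h i)\<^sup>2 \<le> nsq h" unfolding nsq_def using i by (intro member_le_sum) auto
      then have "(- h i)\<^sup>2 \<le> \<epsilon>\<^sup>2" using nh3 by simp
      then have "- h i \<le> \<epsilon>" using power2_le_imp_le[of "- h i" \<epsilon>] ep by simp
      moreover have "h i \<le> G i y" unfolding h_def by (rule hv_le)
      ultimately show "G i y \<ge> -\<epsilon>" by simp
    qed
    define a where "a = \<epsilon> / (4*\<Lambda>)"
    have apos: "a > 0" unfolding a_def using ep L0 by simp
    have psi_sum: "(\<Sum>i<m. psi \<beta> (G i y) (l i)) \<le> a * nsq l + nsq h / (4*a)"
    proof -
      have "(\<Sum>i<m. psi \<beta> (G i y) (l i)) \<le> (\<Sum>i<m. a * (l i)\<^sup>2 + (h i)\<^sup>2 / (4*a))"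
      proof (intro sum_mono)
        fix i assume "i \<in> {..<m}"
        have "psi \<beta> (G i y) (l i) = l i * h i - \<beta> * (h i)\<^sup>2 / 2"
          unfolding h_def hv_def by (rule psi_lh[OF beta])
        also have "\<dots> \<le> l i * h i" using beta by simp
        also have "\<dots> \<le> a * (l i)\<^sup>2 + (h i)\<^sup>2 / (4*a)" by (rule xy_le[OF apos])
        finally show "psi \<beta> (G i y) (l i) \<le> a * (l i)\<^sup>2 + (h i)\<^sup>2 / (4*a)" .
      qed
      then show ?thesis unfolding nsq_def by (simp add: sum.distrib sum_distrib_left sum_divide_distrib)
    qed
    have t1: "a * nsq l \<le> \<epsilon>/4"
    proof -
      have "nsq l \<le> \<Lambda>" using nsq_le[of l] Rl unfolding \<Lambda>_def by simp
      then have "a * nsq l \<le> a * \<Lambda>" using apos by (intro mult_left_mono) auto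
      also have "a * \<Lambda> = \<epsilon>/4" unfolding a_def using L0 by simp
      finally show ?thesis .
    qed
    have t2: "nsq h / (4*a) \<le> \<Lambda>*B*\<epsilon>/C2"
    proof -
      have "nsq h / (4*a) = nsq h * (\<Lambda>/\<epsilon>)" unfolding a_def using ep L0 by simp
      also have "\<dots> \<le> (B * \<epsilon>\<^sup>2 / C2) * (\<Lambda>/\<epsilon>)" using nh2 ep L0 by (intro mult_right_mono) auto
      also have "\<dots> = \<Lambda>*B*\<epsilon>/C2" using ep by (simp add: power2_eq_square)
      finally show ?thesis .
    qed
    have t3: "eps T \<le> C1*\<epsilon>/C2"
    proof -
      have "eps T \<le> C1/(real T)\<^sup>2" using e T2 by simp
      also have "\<dots> \<le> C1/real T" using T2 C1 by (intro divide_left_mono) (auto simp: power2_eq_square)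
      also have "\<dots> = C1 * (1/real T)" by simp
      also have "\<dots> \<le> C1 * (\<epsilon>\<^sup>2/C2)" using invT C1 by (intro mult_left_mono) auto
      also have "\<dots> \<le> C1 * (\<epsilon>/C2)"
      proof -
        have "\<epsilon>\<^sup>2 \<le> \<epsilon>" using ep by (simp add: power2_eq_square)
        then show ?thesis using C1 C2pos by (intro mult_left_mono divide_right_mono) auto
      qed
      finally show ?thesis by simp
    qed
    have t4: "C1*\<epsilon>/C2 + \<Lambda>*B*\<epsilon>/C2 \<le> \<epsilon>/4"
    proof -
      have "C1*\<epsilon>/C2 + \<Lambda>*B*\<epsilon>/C2 = (C1 + \<Lambda>*B) * \<epsilon> / C2" by (simp add: add_divide_distrib distrib_right)
      also have "\<dots> \<le> (C2/4) * \<epsilon> / C2"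
        unfolding C2_def using ep B0 LB0 C1 by (intro divide_right_mono mult_right_mono) auto
      also have "\<dots> = \<epsilon>/4" using C2pos by simp
      finally show ?thesis .
    qed
    have "v y = F l y - (\<Sum>i<m. psi \<beta> (G i y) (l i))" unfolding F_def by simp
    moreover have "Dual l \<ge> Vs" by (rule Dual_ge_Vs)
    ultimately have vy: "v y \<ge> Vs - eps T - (a * nsq l + nsq h / (4*a))" using opt psi_sum by simp
    have "v y \<ge> Vs - \<epsilon>" using vy t1 t2 t3 t4 ep by argo
    then show "v (ys (T+1)) \<ge> Vs - \<epsilon> \<and> (\<forall>i<m. G i (ys (T+1)) \<ge> -\<epsilon>)" using cons unfolding y_def by simp
  qed
qed

end

lemma sum_pair: "(\<Sum>x\<in>(UNIV::('s::finite \<times> 'a::finite) set). f x) = (\<Sum>s\<in>UNIV. \<Sum>a\<in>UNIV. f (s,a))"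
  by (simp add: sum.cartesian_product)

lemma sa_Suc: "sa_dist P pol d (Suc n) x = (\<Sum>y\<in>UNIV. sa_dist P pol d n y * P (fst y) (snd y) (fst x)) * pol (fst x) (snd x)"
  by (cases x) simp

lemma sa_nonneg:
  assumes K: "is_kernel P" and pol: "is_policy pol" and d: "\<forall>x. d x \<ge> 0"
  shows "sa_dist P pol d n x \<ge> 0"
proof (induction n arbitrary: x)
  case 0 then show ?case using d by (metis sa_dist.simps(1))
next
  case (Suc n)
  have "\<forall>y. P (fst y) (snd y) (fst x) \<ge> 0" using K unfolding is_kernel_def is_distr_def by simp
  moreover have "pol (fst x) (snd x) \<ge> 0" using pol unfolding is_policy_def is_distr_def by simp
  ultimately show ?case unfolding sa_Suc using Suc by (intro mult_nonneg_nonneg sum_nonneg) auto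
qed

lemma sa_mass:
  assumes K: "is_kernel P" and pol: "is_policy pol"
  shows "(\<Sum>x\<in>UNIV. sa_dist P pol d n x) = (\<Sum>x\<in>UNIV. d x)"
proof (induction n)
  case 0 then show ?case by simp
next
  case (Suc n)
  have "(\<Sum>x\<in>UNIV. sa_dist P pol d (Suc n) x)
      = (\<Sum>s\<in>UNIV. \<Sum>a\<in>UNIV. (\<Sum>y\<in>UNIV. sa_dist P pol d n y * P (fst y) (snd y) s) * pol s a)"
    unfolding sa_Suc by (subst sum_pair) simp
  also have "\<dots> = (\<Sum>s\<in>UNIV. (\<Sum>y\<in>UNIV. sa_dist P pol d n y * P (fst y) (snd y) s) * (\<Sum>a\<in>UNIV. pol s a))"
    by (simp add: sum_distrib_left)
  also have "\<dots> = (\<Sum>s\<in>UNIV. (\<Sum>y\<in>UNIV. sa_dist P pol d n y * P (fst y) (snd y) s))"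
    using pol unfolding is_policy_def is_distr_def by simp
  also have "\<dots> = (\<Sum>y\<in>UNIV. sa_dist P pol d n y * (\<Sum>s\<in>UNIV. P (fst y) (snd y) s))"
    by (subst sum.swap) (simp add: sum_distrib_left)
  also have "\<dots> = (\<Sum>y\<in>UNIV. sa_dist P pol d n y)"
    using K unfolding is_kernel_def is_distr_def by simp
  finally show ?case using Suc by simp
qed

lemma sa_le1:
  assumes K: "is_kernel P" and pol: "is_policy pol" and d: "is_distr d"
  shows "sa_dist P pol d n x \<le> 1"
proof -
  have nn: "\<forall>y. sa_dist P pol d n y \<ge> 0" using sa_nonneg[OF K pol] d unfolding is_distr_def by blast
  have "sa_dist P pol d n x \<le> (\<Sum>y\<in>UNIV. sa_dist P pol d n y)"
    using nn by (intro member_le_sum) auto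
  also have "\<dots> = 1" using sa_mass[OF K pol] d unfolding is_distr_def by simp
  finally show ?thesis .
qed

definition dlt :: "'x \<Rightarrow> 'x \<Rightarrow> real" where "dlt y = (\<lambda>z. if z = y then 1 else 0)"

lemma sa_linear:
  "sa_dist P pol d n x = (\<Sum>y\<in>UNIV. d y * sa_dist P pol (dlt y) n x)"
proof (induction n arbitrary: x)
  case 0
  have "(\<Sum>y\<in>UNIV. d y * sa_dist P pol (dlt y) 0 x) = (\<Sum>y\<in>UNIV. if y = x then d y else 0)"
    unfolding dlt_def by (intro sum.cong) auto
  then show ?case by simp
next
  case (Suc n)
  have "sa_dist P pol d (Suc n) x = (\<Sum>z\<in>UNIV. (\<Sum>y\<in>UNIV. d y * sa_dist P pol (dlt y) n z) * P (fst z) (snd z) (fst x)) * pol (fst x) (snd x)"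
    unfolding sa_Suc using Suc by simp
  also have "\<dots> = (\<Sum>y\<in>UNIV. d y * ((\<Sum>z\<in>UNIV. sa_dist P pol (dlt y) n z * P (fst z) (snd z) (fst x)) * pol (fst x) (snd x)))"
  proof -
    have "(\<Sum>z\<in>UNIV. (\<Sum>y\<in>UNIV. d y * sa_dist P pol (dlt y) n z) * P (fst z) (snd z) (fst x))
        = (\<Sum>z\<in>UNIV. \<Sum>y\<in>UNIV. d y * (sa_dist P pol (dlt y) n z * P (fst z) (snd z) (fst x)))"
      by (simp add: sum_distrib_right mult.assoc)
    also have "\<dots> = (\<Sum>y\<in>UNIV. \<Sum>z\<in>UNIV. d y * (sa_dist P pol (dlt y) n z * P (fst z) (snd z) (fst x)))"
      by (rule sum.swap)
    also have "\<dots> = (\<Sum>y\<in>UNIV. d y * (\<Sum>z\<in>UNIV. sa_dist P pol (dlt y) n z * P (fst z) (snd z) (fst x)))"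
      by (simp add: sum_distrib_left)
    finally show ?thesis by (simp add: sum_distrib_right mult.assoc)
  qed
  also have "\<dots> = (\<Sum>y\<in>UNIV. d y * sa_dist P pol (dlt y) (Suc n) x)"
    unfolding sa_Suc by simp
  finally show ?case .
qed

lemma dlt_distr: "is_distr (dlt (y::'x::finite))"
  unfolding is_distr_def dlt_def by simp

definition dd0 :: "('s \<Rightarrow> real) \<Rightarrow> ('s \<Rightarrow> 'a \<Rightarrow> real) \<Rightarrow> 's \<times> 'a \<Rightarrow> real" where
  "dd0 \<rho> pol = (\<lambda>y. \<rho> (fst y) * pol (fst y) (snd y))"

definition occ :: "('s::finite \<Rightarrow> 'a::finite \<Rightarrow> 's \<Rightarrow> real) \<Rightarrow> real \<Rightarrow> ('s \<Rightarrow> real)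
    \<Rightarrow> ('s \<Rightarrow> 'a \<Rightarrow> real) \<Rightarrow> 's \<times> 'a \<Rightarrow> real" where
  "occ P \<gamma> \<rho> pol x = (\<Sum>\<tau>. \<gamma> ^ \<tau> * sa_dist P pol (dd0 \<rho> pol) \<tau> x)"

lemma dd0_distr: assumes pol: "is_policy pol" and init: "is_distr \<rho>"
  shows "is_distr (dd0 \<rho> (pol::'s::finite \<Rightarrow> 'a::finite \<Rightarrow> real))"
proof -
  have nn: "\<forall>x. dd0 \<rho> pol x \<ge> 0" using pol init unfolding dd0_def is_policy_def is_distr_def by simp
  have "(\<Sum>x\<in>UNIV. dd0 \<rho> pol x) = (\<Sum>s\<in>UNIV. \<Sum>a\<in>UNIV. \<rho> s * pol s a)"
    unfolding dd0_def by (subst sum_pair) simp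
  also have "\<dots> = (\<Sum>s\<in>UNIV. \<rho> s * (\<Sum>a\<in>UNIV. pol s a))" by (simp add: sum_distrib_left)
  also have "\<dots> = 1" using pol init unfolding is_policy_def is_distr_def by simp
  finally show ?thesis using nn unfolding is_distr_def by simp
qed

context
  fixes P :: "'s::finite \<Rightarrow> 'a::finite \<Rightarrow> 's \<Rightarrow> real" and pol :: "'s \<Rightarrow> 'a \<Rightarrow> real"
    and \<gamma> :: real
  assumes K: "is_kernel P" and pol: "is_policy pol" and g0: "0 \<le> \<gamma>" and g1: "\<gamma> < 1"
begin

lemma geo: "summable (\<lambda>\<tau>. \<gamma> ^ \<tau>)" using g0 g1 by (intro summable_geometric) simp

lemma summ_gen: assumes d: "is_distr d"
  shows "summable (\<lambda>\<tau>. \<gamma> ^ \<tau> * (\<Sum>x\<in>UNIV. sa_dist P pol d \<tau> x * u x))"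
proof (rule summable_comparison_test'[where N=0])
  show "summable (\<lambda>\<tau>. \<gamma> ^ \<tau> * (\<Sum>x\<in>UNIV. \<bar>u x\<bar>))" using geo by (rule summable_mult2)
  fix \<tau> :: nat
  have nn: "\<And>x. sa_dist P pol d \<tau> x \<ge> 0" using sa_nonneg[OF K pol] d unfolding is_distr_def by blast
  have le1: "\<And>x. sa_dist P pol d \<tau> x \<le> 1" using sa_le1[OF K pol d] by blast
  have "\<bar>\<Sum>x\<in>UNIV. sa_dist P pol d \<tau> x * u x\<bar> \<le> (\<Sum>x\<in>UNIV. \<bar>sa_dist P pol d \<tau> x * u x\<bar>)"
    by (rule sum_abs)
  also have "\<dots> \<le> (\<Sum>x\<in>UNIV. \<bar>u x\<bar>)"
  proof (intro sum_mono)
    fix x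
    have "\<bar>sa_dist P pol d \<tau> x * u x\<bar> = sa_dist P pol d \<tau> x * \<bar>u x\<bar>" using nn[of x] by (simp add: abs_mult)
    also have "\<dots> \<le> 1 * \<bar>u x\<bar>" using le1[of x] by (intro mult_right_mono) auto
    finally show "\<bar>sa_dist P pol d \<tau> x * u x\<bar> \<le> \<bar>u x\<bar>" by simp
  qed
  finally have "\<bar>\<Sum>x\<in>UNIV. sa_dist P pol d \<tau> x * u x\<bar> \<le> (\<Sum>x\<in>UNIV. \<bar>u x\<bar>)" .
  then show "norm (\<gamma> ^ \<tau> * (\<Sum>x\<in>UNIV. sa_dist P pol d \<tau> x * u x)) \<le> \<gamma> ^ \<tau> * (\<Sum>x\<in>UNIV. \<bar>u x\<bar>)"
    using g0 by (simp add: abs_mult mult_left_mono)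
qed

lemma summ_x: assumes d: "is_distr d"
  shows "summable (\<lambda>\<tau>. \<gamma> ^ \<tau> * sa_dist P pol d \<tau> x)"
proof (rule summable_comparison_test'[where N=0])
  show "summable (\<lambda>\<tau>. \<gamma> ^ \<tau>)" by (rule geo)
  fix \<tau> :: nat
  have "sa_dist P pol d \<tau> x \<ge> 0" using sa_nonneg[OF K pol] d unfolding is_distr_def by blast
  moreover have "sa_dist P pol d \<tau> x \<le> 1" using sa_le1[OF K pol d] by blast
  ultimately show "norm (\<gamma> ^ \<tau> * sa_dist P pol d \<tau> x) \<le> \<gamma> ^ \<tau>"
    using g0 by (simp add: abs_mult mult_left_le)
qed

lemma Vrho_occ: assumes init: "is_distr \<rho>"
  shows "Vrho P \<gamma> \<rho> pol u = (\<Sum>x\<in>UNIV. occ P \<gamma> \<rho> pol x * u x)"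
proof -
  let ?D = "sa_dist P pol (dd0 \<rho> pol)"
  define f where "f y \<tau> = \<gamma> ^ \<tau> * (\<Sum>x\<in>UNIV. sa_dist P pol (dlt y) \<tau> x * u x)" for y \<tau>
  have sf: "summable (f y)" for y unfolding f_def by (rule summ_gen[OF dlt_distr])
  have Q: "Qfun P \<gamma> pol u (fst y) (snd y) = suminf (f y)" for y
    unfolding Qfun_def f_def dlt_def by simp
  have "Vrho P \<gamma> \<rho> pol u = (\<Sum>s\<in>UNIV. \<Sum>a\<in>UNIV. dd0 \<rho> pol (s,a) * Qfun P \<gamma> pol u s a)"
    unfolding Vrho_def Vfun_def dd0_def by (simp add: sum_distrib_left mult.assoc)
  also have "\<dots> = (\<Sum>y\<in>UNIV. dd0 \<rho> pol y * Qfun P \<gamma> pol u (fst y) (snd y))"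
    by (subst sum_pair) simp
  also have "\<dots> = (\<Sum>y\<in>UNIV. suminf (\<lambda>\<tau>. dd0 \<rho> pol y * f y \<tau>))"
    unfolding Q using suminf_mult[OF sf] by simp
  also have "\<dots> = suminf (\<lambda>\<tau>. \<Sum>y\<in>UNIV. dd0 \<rho> pol y * f y \<tau>)"
    by (rule suminf_sum[symmetric]) (intro summable_mult sf)
  also have "(\<lambda>\<tau>. \<Sum>y\<in>UNIV. dd0 \<rho> pol y * f y \<tau>) = (\<lambda>\<tau>. \<gamma> ^ \<tau> * (\<Sum>x\<in>UNIV. ?D \<tau> x * u x))"
  proof
    fix \<tau>
    have "(\<Sum>y\<in>UNIV. dd0 \<rho> pol y * f y \<tau>) = \<gamma> ^ \<tau> * (\<Sum>y\<in>UNIV. \<Sum>x\<in>UNIV. dd0 \<rho> pol y * sa_dist P pol (dlt y) \<tau> x * u x)"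
      unfolding f_def by (simp add: sum_distrib_left sum_distrib_right mult_ac)
    also have "(\<Sum>y\<in>UNIV. \<Sum>x\<in>UNIV. dd0 \<rho> pol y * sa_dist P pol (dlt y) \<tau> x * u x)
        = (\<Sum>x\<in>UNIV. \<Sum>y\<in>UNIV. dd0 \<rho> pol y * sa_dist P pol (dlt y) \<tau> x * u x)" by (rule sum.swap)
    also have "\<dots> = (\<Sum>x\<in>UNIV. ?D \<tau> x * u x)"
      by (subst sa_linear[of P pol "dd0 \<rho> pol"]) (simp add: sum_distrib_right)
    finally show "(\<Sum>y\<in>UNIV. dd0 \<rho> pol y * f y \<tau>) = \<gamma> ^ \<tau> * (\<Sum>x\<in>UNIV. ?D \<tau> x * u x)" .
  qed
  finally have L: "Vrho P \<gamma> \<rho> pol u = suminf (\<lambda>\<tau>. \<gamma> ^ \<tau> * (\<Sum>x\<in>UNIV. ?D \<tau> x * u x))" .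
  have d0: "is_distr (dd0 \<rho> pol)" by (rule dd0_distr[OF pol init])
  have "(\<Sum>x\<in>UNIV. occ P \<gamma> \<rho> pol x * u x) = (\<Sum>x\<in>UNIV. suminf (\<lambda>\<tau>. \<gamma> ^ \<tau> * ?D \<tau> x * u x))"
    unfolding occ_def using suminf_mult2[OF summ_x[OF d0]] by simp
  also have "\<dots> = suminf (\<lambda>\<tau>. \<Sum>x\<in>UNIV. \<gamma> ^ \<tau> * ?D \<tau> x * u x)"
    by (rule suminf_sum[symmetric]) (intro summable_mult2 summ_x[OF d0])
  also have "\<dots> = suminf (\<lambda>\<tau>. \<gamma> ^ \<tau> * (\<Sum>x\<in>UNIV. ?D \<tau> x * u x))"
    by (simp add: sum_distrib_left mult.assoc)
  finally show ?thesis using L by simp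
qed

lemma occ_nonneg: assumes init: "is_distr \<rho>" shows "occ P \<gamma> \<rho> pol x \<ge> 0"
proof -
  have d0: "is_distr (dd0 \<rho> pol)" by (rule dd0_distr[OF pol init])
  show ?thesis unfolding occ_def
    using summ_x[OF d0] sa_nonneg[OF K pol] d0 g0 unfolding is_distr_def
    by (intro suminf_nonneg) auto
qed

lemma occ_flow: assumes init: "is_distr \<rho>"
  shows "occ P \<gamma> \<rho> pol (s,a) = pol s a * (\<rho> s + \<gamma> * (\<Sum>x\<in>UNIV. occ P \<gamma> \<rho> pol x * P (fst x) (snd x) s))"
proof -
  let ?D = "sa_dist P pol (dd0 \<rho> pol)"
  have d0: "is_distr (dd0 \<rho> pol)" by (rule dd0_distr[OF pol init])
  define f where "f \<tau> = \<gamma> ^ \<tau> * ?D \<tau> (s,a)" for \<tau>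
  have sf: "summable f" unfolding f_def by (rule summ_x[OF d0])
  have "suminf (\<lambda>n. f (Suc n)) = suminf f - f 0" by (rule suminf_split_head[OF sf])
  then have A: "suminf f = f 0 + suminf (\<lambda>n. f (Suc n))" by simp
  have f0: "f 0 = \<rho> s * pol s a" unfolding f_def dd0_def by simp
  have fS: "f (Suc n) = \<gamma> * pol s a * (\<Sum>x\<in>UNIV. \<gamma> ^ n * ?D n x * P (fst x) (snd x) s)" for n
    unfolding f_def by (simp add: sum_distrib_left sum_distrib_right mult_ac)
  have "suminf (\<lambda>n. f (Suc n)) = \<gamma> * pol s a * suminf (\<lambda>n. \<Sum>x\<in>UNIV. \<gamma> ^ n * ?D n x * P (fst x) (snd x) s)"
    unfolding fS by (rule suminf_mult) (intro summable_sum summable_mult2 summ_x[OF d0])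
  also have "suminf (\<lambda>n. \<Sum>x\<in>UNIV. \<gamma> ^ n * ?D n x * P (fst x) (snd x) s)
      = (\<Sum>x\<in>UNIV. suminf (\<lambda>n. \<gamma> ^ n * ?D n x * P (fst x) (snd x) s))"
    by (rule suminf_sum) (intro summable_mult2 summ_x[OF d0])
  also have "\<dots> = (\<Sum>x\<in>UNIV. occ P \<gamma> \<rho> pol x * P (fst x) (snd x) s)"
    unfolding occ_def using suminf_mult2[OF summ_x[OF d0]] by simp
  finally have B: "suminf (\<lambda>n. f (Suc n)) = \<gamma> * pol s a * (\<Sum>x\<in>UNIV. occ P \<gamma> \<rho> pol x * P (fst x) (snd x) s)" .
  have "occ P \<gamma> \<rho> pol (s,a) = suminf f" unfolding occ_def f_def by simp
  then show ?thesis using A B f0 by (simp add: algebra_simps)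
qed

lemma occ_flow_sum: assumes init: "is_distr \<rho>"
  shows "(\<Sum>a\<in>UNIV. occ P \<gamma> \<rho> pol (s,a)) = \<rho> s + \<gamma> * (\<Sum>x\<in>UNIV. occ P \<gamma> \<rho> pol x * P (fst x) (snd x) s)"
  unfolding occ_flow[OF init] using pol unfolding is_policy_def is_distr_def
  by (simp add: sum_distrib_right[symmetric])

end

lemma occ_converse:
  fixes P :: "'s::finite \<Rightarrow> 'a::finite \<Rightarrow> 's \<Rightarrow> real"
  assumes K: "is_kernel P" and init: "is_distr \<rho>" and g0: "0 \<le> \<gamma>" and g1: "\<gamma> < 1"
    and dnn: "\<forall>x. d x \<ge> 0"
    and flow: "\<forall>s. (\<Sum>a\<in>UNIV. d (s,a)) = \<rho> s + \<gamma> * (\<Sum>x\<in>UNIV. d x * P (fst x) (snd x) s)"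
  shows "\<exists>pol. is_policy pol \<and> (\<forall>x. occ P \<gamma> \<rho> pol x = d x)"
proof -
  define Z where "Z s = (\<Sum>a\<in>UNIV. d (s,a))" for s
  define pol where "pol s a = (if Z s > 0 then d (s,a) / Z s else 1 / real CARD('a))" for s a
  have card: "real CARD('a) > 0" by simp
  have Znn: "Z s \<ge> 0" for s unfolding Z_def using dnn by (intro sum_nonneg) auto
  have pol_pol: "is_policy pol"
    unfolding is_policy_def is_distr_def
  proof (intro allI conjI)
    fix s a show "0 \<le> pol s a" unfolding pol_def using dnn card by auto
  next
    fix s show "(\<Sum>a\<in>UNIV. pol s a) = 1"
    proof (cases "Z s > 0")
      case True
      then have "(\<Sum>a\<in>UNIV. pol s a) = (\<Sum>a\<in>UNIV. d (s,a)) / Z s" unfolding pol_def by (simp add: sum_divide_distrib)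
      then show ?thesis using True unfolding Z_def by simp
    next
      case False
      then have "(\<Sum>a\<in>UNIV. pol s a) = real CARD('a) * (1 / real CARD('a))" unfolding pol_def by simp
      then show ?thesis using card by simp
    qed
  qed
  have dpol: "d (s,a) = pol s a * Z s" for s a
  proof (cases "Z s > 0")
    case True then show ?thesis unfolding pol_def by simp
  next
    case False
    then have "Z s = 0" using Znn[of s] by simp
    then have "\<forall>a\<in>UNIV. d (s,a) = 0" unfolding Z_def using dnn by (subst sum_nonneg_eq_0_iff[symmetric]) auto
    then show ?thesis using \<open>Z s = 0\<close> by simp
  qed
  define oc where "oc = occ P \<gamma> \<rho> pol"
  define e where "e x = oc x - d x" for x
  have e_eq: "e (s,a) = \<gamma> * pol s a * (\<Sum>x\<in>UNIV. e x * P (fst x) (snd x) s)" for s a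
  proof -
    have "oc (s,a) = pol s a * (\<rho> s + \<gamma> * (\<Sum>x\<in>UNIV. oc x * P (fst x) (snd x) s))"
      unfolding oc_def by (rule occ_flow[OF K pol_pol g0 g1 init])
    moreover have "d (s,a) = pol s a * (\<rho> s + \<gamma> * (\<Sum>x\<in>UNIV. d x * P (fst x) (snd x) s))"
      using dpol[of s a] flow unfolding Z_def by simp
    ultimately show ?thesis unfolding e_def by (simp add: algebra_simps sum_subtractf)
  qed
  have Pnn: "P y b s \<ge> 0" for y b s using K unfolding is_kernel_def is_distr_def by simp
  have polnn: "pol s a \<ge> 0" for s a using pol_pol unfolding is_policy_def is_distr_def by simp
  have abs_e: "\<bar>e (s,a)\<bar> \<le> \<gamma> * pol s a * (\<Sum>x\<in>UNIV. \<bar>e x\<bar> * P (fst x) (snd x) s)" for s a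
  proof -
    have "\<bar>e (s,a)\<bar> = \<gamma> * pol s a * \<bar>\<Sum>x\<in>UNIV. e x * P (fst x) (snd x) s\<bar>"
      unfolding e_eq using g0 polnn[of s a] by (simp add: abs_mult)
    also have "\<dots> \<le> \<gamma> * pol s a * (\<Sum>x\<in>UNIV. \<bar>e x * P (fst x) (snd x) s\<bar>)"
      using g0 polnn[of s a] by (intro mult_left_mono sum_abs) auto
    also have "(\<Sum>x\<in>UNIV. \<bar>e x * P (fst x) (snd x) s\<bar>) = (\<Sum>x\<in>UNIV. \<bar>e x\<bar> * P (fst x) (snd x) s)"
      using Pnn by (simp add: abs_mult)
    finally show ?thesis .
  qed
  have "(\<Sum>x\<in>UNIV. \<bar>e x\<bar>) = (\<Sum>s\<in>UNIV. \<Sum>a\<in>UNIV. \<bar>e (s,a)\<bar>)" by (rule sum_pair)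
  also have "\<dots> \<le> (\<Sum>s\<in>UNIV. \<Sum>a\<in>UNIV. \<gamma> * pol s a * (\<Sum>x\<in>UNIV. \<bar>e x\<bar> * P (fst x) (snd x) s))"
    using abs_e by (intro sum_mono) auto
  also have "\<dots> = (\<Sum>s\<in>UNIV. \<gamma> * (\<Sum>a\<in>UNIV. pol s a) * (\<Sum>x\<in>UNIV. \<bar>e x\<bar> * P (fst x) (snd x) s))"
  proof (intro sum.cong refl)
    fix s
    show "(\<Sum>a\<in>UNIV. \<gamma> * pol s a * (\<Sum>x\<in>UNIV. \<bar>e x\<bar> * P (fst x) (snd x) s))
      = \<gamma> * (\<Sum>a\<in>UNIV. pol s a) * (\<Sum>x\<in>UNIV. \<bar>e x\<bar> * P (fst x) (snd x) s)"
      by (simp only: sum_distrib_right[symmetric] sum_distrib_left[symmetric])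
  qed
  also have "\<dots> = \<gamma> * (\<Sum>s\<in>UNIV. \<Sum>x\<in>UNIV. \<bar>e x\<bar> * P (fst x) (snd x) s)"
    using pol_pol unfolding is_policy_def is_distr_def by (simp add: sum_distrib_left)
  also have "(\<Sum>s\<in>UNIV. \<Sum>x\<in>UNIV. \<bar>e x\<bar> * P (fst x) (snd x) s) = (\<Sum>x\<in>UNIV. \<Sum>s\<in>UNIV. \<bar>e x\<bar> * P (fst x) (snd x) s)"
    by (rule sum.swap)
  also have "\<dots> = (\<Sum>x\<in>UNIV. \<bar>e x\<bar>)"
    using K unfolding is_kernel_def is_distr_def by (simp add: sum_distrib_left[symmetric])
  finally have "(\<Sum>x\<in>UNIV. \<bar>e x\<bar>) \<le> \<gamma> * (\<Sum>x\<in>UNIV. \<bar>e x\<bar>)" .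
  then have "(1 - \<gamma>) * (\<Sum>x\<in>UNIV. \<bar>e x\<bar>) \<le> 0" by (simp add: algebra_simps)
  moreover have "(\<Sum>x\<in>UNIV. \<bar>e x\<bar>) \<ge> 0" by (intro sum_nonneg) auto
  ultimately have "(\<Sum>x\<in>UNIV. \<bar>e x\<bar>) = 0" using g1 by (smt (verit) mult_pos_pos)
  then have "\<forall>x\<in>UNIV. \<bar>e x\<bar> = 0" by (subst sum_nonneg_eq_0_iff[symmetric]) auto
  then have "\<forall>x. oc x = d x" unfolding e_def by simp
  then show ?thesis using pol_pol unfolding oc_def by blast
qed

definition Kset :: "('s::finite \<Rightarrow> 'a::finite \<Rightarrow> 's \<Rightarrow> real) \<Rightarrow> real \<Rightarrow> ('s \<Rightarrow> real) \<Rightarrow> (real^('s \<times> 'a)) set" where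
  "Kset P \<gamma> \<rho> = {w. (\<forall>x. w$x \<ge> 0) \<and> (\<forall>s. (\<Sum>a\<in>UNIV. w$(s,a)) = \<rho> s + \<gamma> * (\<Sum>x\<in>UNIV. w$x * P (fst x) (snd x) s))}"

definition ovec :: "('s::finite \<Rightarrow> 'a::finite \<Rightarrow> 's \<Rightarrow> real) \<Rightarrow> real \<Rightarrow> ('s \<Rightarrow> real) \<Rightarrow> ('s \<Rightarrow> 'a \<Rightarrow> real) \<Rightarrow> real^('s \<times> 'a)" where
  "ovec P \<gamma> \<rho> pol = (\<chi> x. occ P \<gamma> \<rho> pol x)"

definition lin :: "('x::finite \<Rightarrow> real) \<Rightarrow> real^'x \<Rightarrow> real" where
  "lin u w = (\<Sum>x\<in>UNIV. w$x * u x)"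

lemma sum_aff: "(\<Sum>x\<in>A. ((1-s)*a x + s*b x) * u x) = (1-s)*(\<Sum>x\<in>A. a x * u x) + s*(\<Sum>x\<in>A. b x * u x)"
  for a b u :: "'x \<Rightarrow> real"
  by (simp add: sum.distrib sum_distrib_left distrib_right mult.assoc)

lemma lin_aff: "lin u ((1-s) *\<^sub>R y + s *\<^sub>R z) = (1-s) * lin u y + s * lin u z"
  unfolding lin_def using sum_aff[of s "\<lambda>x. y$x" "\<lambda>x. z$x" u UNIV] by simp

context
  fixes P :: "'s::finite \<Rightarrow> 'a::finite \<Rightarrow> 's \<Rightarrow> real" and \<gamma> :: real and \<rho> :: "'s \<Rightarrow> real"
  assumes K: "is_kernel P" and init: "is_distr \<rho>" and g0: "0 \<le> \<gamma>" and g1: "\<gamma> < 1"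
begin

lemma ovec_in: assumes pol: "is_policy pol" shows "ovec P \<gamma> \<rho> pol \<in> Kset P \<gamma> \<rho>"
  unfolding Kset_def ovec_def
  using occ_nonneg[OF K pol g0 g1 init] occ_flow_sum[OF K pol g0 g1 init] by simp

lemma Vrho_lin: assumes pol: "is_policy pol" shows "Vrho P \<gamma> \<rho> pol u = lin u (ovec P \<gamma> \<rho> pol)"
  unfolding lin_def ovec_def using Vrho_occ[OF K pol g0 g1 init] by simp

lemma Kset_real: assumes w: "w \<in> Kset P \<gamma> \<rho>" shows "\<exists>pol. is_policy pol \<and> ovec P \<gamma> \<rho> pol = w"
proof -
  have "\<exists>pol. is_policy pol \<and> (\<forall>x. occ P \<gamma> \<rho> pol x = w$x)"
    using w unfolding Kset_def by (intro occ_converse[OF K init g0 g1]) auto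
  then show ?thesis unfolding ovec_def by (auto simp: vec_eq_iff)
qed

lemma Kset_conv: assumes "y \<in> Kset P \<gamma> \<rho>" "z \<in> Kset P \<gamma> \<rho>" "0 \<le> s" "s \<le> 1"
  shows "(1-s) *\<^sub>R y + s *\<^sub>R z \<in> Kset P \<gamma> \<rho>"
proof -
  have nn: "\<forall>x. ((1-s) *\<^sub>R y + s *\<^sub>R z)$x \<ge> 0" using assms unfolding Kset_def by simp
  have fl: "(\<Sum>a\<in>UNIV. ((1-s) *\<^sub>R y + s *\<^sub>R z)$(t,a)) = \<rho> t + \<gamma> * (\<Sum>x\<in>UNIV. ((1-s) *\<^sub>R y + s *\<^sub>R z)$x * P (fst x) (snd x) t)" for t
  proof -
    have fy: "(\<Sum>a\<in>UNIV. y$(t,a)) = \<rho> t + \<gamma> * (\<Sum>x\<in>UNIV. y$x * P (fst x) (snd x) t)" using assms unfolding Kset_def by simp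
    have fz: "(\<Sum>a\<in>UNIV. z$(t,a)) = \<rho> t + \<gamma> * (\<Sum>x\<in>UNIV. z$x * P (fst x) (snd x) t)" using assms unfolding Kset_def by simp
    have "(\<Sum>a\<in>UNIV. ((1-s) *\<^sub>R y + s *\<^sub>R z)$(t,a)) = (1-s) * (\<Sum>a\<in>UNIV. y$(t,a)) + s * (\<Sum>a\<in>UNIV. z$(t,a))"
      by (simp add: sum.distrib sum_distrib_left)
    also have "\<dots> = (1-s) * (\<rho> t + \<gamma> * (\<Sum>x\<in>UNIV. y$x * P (fst x) (snd x) t)) + s * (\<rho> t + \<gamma> * (\<Sum>x\<in>UNIV. z$x * P (fst x) (snd x) t))"
      using fy fz by simp
    also have "\<dots> = \<rho> t + \<gamma> * ((1-s) * (\<Sum>x\<in>UNIV. y$x * P (fst x) (snd x) t) + s * (\<Sum>x\<in>UNIV. z$x * P (fst x) (snd x) t))"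
      by (simp add: algebra_simps)
    also have "\<dots> = \<rho> t + \<gamma> * (\<Sum>x\<in>UNIV. ((1-s) *\<^sub>R y + s *\<^sub>R z)$x * P (fst x) (snd x) t)"
      using sum_aff[of s "\<lambda>x. y$x" "\<lambda>x. z$x" "\<lambda>x. P (fst x) (snd x) t" UNIV] by simp
    finally show ?thesis .
  qed
  show ?thesis unfolding Kset_def using nn fl by simp
qed

lemma Kset_sum: assumes w: "w \<in> Kset P \<gamma> \<rho>" shows "(\<Sum>x\<in>UNIV. w$x) = 1 / (1 - \<gamma>)"
proof -
  have "(\<Sum>x\<in>UNIV. w$x) = (\<Sum>s\<in>UNIV. \<Sum>a\<in>UNIV. w$(s,a))" by (rule sum_pair)
  also have "\<dots> = (\<Sum>s\<in>UNIV. \<rho> s + \<gamma> * (\<Sum>x\<in>UNIV. w$x * P (fst x) (snd x) s))"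
    using w unfolding Kset_def by simp
  also have "\<dots> = 1 + \<gamma> * (\<Sum>s\<in>UNIV. \<Sum>x\<in>UNIV. w$x * P (fst x) (snd x) s)"
    using init unfolding is_distr_def by (simp add: sum.distrib sum_distrib_left)
  also have "(\<Sum>s\<in>UNIV. \<Sum>x\<in>UNIV. w$x * P (fst x) (snd x) s) = (\<Sum>x\<in>UNIV. \<Sum>s\<in>UNIV. w$x * P (fst x) (snd x) s)"
    by (rule sum.swap)
  also have "\<dots> = (\<Sum>x\<in>UNIV. w$x)"
    using K unfolding is_kernel_def is_distr_def by (simp add: sum_distrib_left[symmetric])
  finally have "(1 - \<gamma>) * (\<Sum>x\<in>UNIV. w$x) = 1" by (simp add: algebra_simps)
  then show ?thesis using g1 by (simp add: field_simps)
qed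

lemma Kset_compact: "compact (Kset P \<gamma> \<rho>)"
proof -
  have cl: "closed (Kset P \<gamma> \<rho>)"
  proof -
    have "Kset P \<gamma> \<rho> = {w. \<forall>x. 0 \<le> w$x} \<inter> {w. \<forall>s. (\<Sum>a\<in>UNIV. w$(s,a)) = \<rho> s + \<gamma> * (\<Sum>x\<in>UNIV. w$x * P (fst x) (snd x) s)}"
      unfolding Kset_def by auto
    moreover have "closed {w::real^('s\<times>'a). \<forall>x. 0 \<le> w$x}"
      by (intro closed_Collect_all closed_Collect_le continuous_intros)
    moreover have "closed {w::real^('s\<times>'a). \<forall>s. (\<Sum>a\<in>UNIV. w$(s,a)) = \<rho> s + \<gamma> * (\<Sum>x\<in>UNIV. w$x * P (fst x) (snd x) s)}"
      by (intro closed_Collect_all closed_Collect_eq continuous_intros)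
    ultimately show ?thesis by (simp add: closed_Int)
  qed
  have bd: "bounded (Kset P \<gamma> \<rho>)"
  proof -
    have "Kset P \<gamma> \<rho> \<subseteq> cbox 0 (\<chi> x. 1 / (1 - \<gamma>))"
    proof
      fix w assume w: "w \<in> Kset P \<gamma> \<rho>"
      have nn: "\<forall>x. w$x \<ge> 0" using w unfolding Kset_def by simp
      have "w$i \<le> 1/(1-\<gamma>)" for i
      proof -
        have "w$i \<le> (\<Sum>x\<in>UNIV. w$x)" using nn by (intro member_le_sum) auto
        then show ?thesis using Kset_sum[OF w] by simp
      qed
      then show "w \<in> cbox 0 (\<chi> x. 1 / (1 - \<gamma>))" using nn unfolding mem_box_cart by simp
    qed
    then show ?thesis using bounded_cbox bounded_subset by blast
  qed
  show ?thesis using cl bd by (simp add: compact_eq_bounded_closed)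
qed

end

lemma cone_repr:
  fixes S :: "'v::real_vector set"
  assumes fin: "finite S" and y: "y \<in> convex_cone hull S"
  shows "\<exists>cf. (\<forall>g\<in>S. cf g \<ge> 0) \<and> y = (\<Sum>g\<in>S. cf g *\<^sub>R g)"
proof -
  define Cn where "Cn = {y. \<exists>cf. (\<forall>g\<in>S. cf g \<ge> (0::real)) \<and> y = (\<Sum>g\<in>S. cf g *\<^sub>R g)}"
  have "convex_cone Cn"
    unfolding convex_cone_iff
  proof (intro conjI ballI allI impI)
    show "0 \<in> Cn" unfolding Cn_def by (rule CollectI, rule exI[of _ "\<lambda>g. 0"]) simp
  next
    fix x y assume "x \<in> Cn" "y \<in> Cn"
    then obtain c1 c2 where c1: "\<forall>g\<in>S. c1 g \<ge> 0" "x = (\<Sum>g\<in>S. c1 g *\<^sub>R g)"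
      and c2: "\<forall>g\<in>S. c2 g \<ge> 0" "y = (\<Sum>g\<in>S. c2 g *\<^sub>R g)" unfolding Cn_def by blast
    show "x + y \<in> Cn" unfolding Cn_def
      by (rule CollectI, rule exI[of _ "\<lambda>g. c1 g + c2 g"]) (use c1 c2 in \<open>simp add: scaleR_add_left sum.distrib\<close>)
  next
    fix x and t :: real assume "x \<in> Cn" "0 \<le> t"
    then obtain c1 where c1: "\<forall>g\<in>S. c1 g \<ge> 0" "x = (\<Sum>g\<in>S. c1 g *\<^sub>R g)" unfolding Cn_def by blast
    show "t *\<^sub>R x \<in> Cn" unfolding Cn_def
      by (rule CollectI, rule exI[of _ "\<lambda>g. t * c1 g"]) (use c1 \<open>0 \<le> t\<close> in \<open>simp add: scaleR_sum_right\<close>)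
  qed
  moreover have "S \<subseteq> Cn"
  proof
    fix g0 assume g0: "g0 \<in> S"
    have "(\<Sum>g\<in>S. (if g = g0 then 1 else 0) *\<^sub>R g) = (\<Sum>g\<in>S. if g = g0 then g else 0)"
      by (intro sum.cong) auto
    also have "\<dots> = g0" using g0 fin by simp
    finally show "g0 \<in> Cn" unfolding Cn_def
      by (intro CollectI exI[of _ "\<lambda>g. if g = g0 then 1 else 0"]) auto
  qed
  ultimately have "convex_cone hull S \<subseteq> Cn" by (rule hull_minimal[rotated])
  then show ?thesis using y unfolding Cn_def by blast
qed

lemma cone_sep:
  fixes S :: "'v::euclidean_space set"
  assumes fin: "finite S" and q: "q \<notin> convex_cone hull S"
  shows "\<exists>a. (\<forall>g\<in>S. inner a g \<ge> 0) \<and> inner a q < 0"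
proof -
  let ?H = "convex_cone hull S"
  have cl: "closed ?H" by (rule polyhedron_imp_closed[OF polyhedron_convex_cone_hull[OF fin]])
  have cv: "convex ?H" by (rule convex_convex_cone_hull)
  obtain a bb where ab: "inner a q < bb" "\<forall>x\<in>?H. inner a x > bb"
    using separating_hyperplane_closed_point[OF cv cl q] by (elim exE conjE) blast
  have "(0::'v) \<in> ?H" by (rule convex_cone_hull_contains_0)
  then have "inner a 0 > bb" using ab(2) by blast
  then have b0: "bb < 0" by simp
  have "inner a g \<ge> 0" if g: "g \<in> S" for g
  proof (rule ccontr)
    assume "\<not> inner a g \<ge> 0"
    then have neg: "inner a g < 0" by simp
    define t where "t = bb / inner a g"
    have t0: "t \<ge> 0" unfolding t_def using b0 neg by (simp add: divide_nonpos_neg)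
    have "g \<in> ?H" using g by (rule hull_inc)
    then have "t *\<^sub>R g \<in> ?H" using t0 by (rule convex_cone_hull_mul)
    then have "inner a (t *\<^sub>R g) > bb" using ab(2) by blast
    moreover have "inner a (t *\<^sub>R g) = bb" unfolding t_def using neg by simp
    ultimately show False by simp
  qed
  then have "\<forall>g\<in>S. inner a g \<ge> 0" by blast
  moreover have "inner a q < 0" using ab(1) b0 by simp
  ultimately show ?thesis by blast
qed

lemma sum_image_avg:
  fixes h :: "'b \<Rightarrow> real"
  assumes fin: "finite I"
  shows "(\<Sum>y\<in>f ` I. h y) = (\<Sum>i\<in>I. h (f i) / real (card {j\<in>I. f j = f i}))"
proof -
  have "(\<Sum>i\<in>I. h (f i) / real (card {j\<in>I. f j = f i}))
      = (\<Sum>y\<in>f ` I. \<Sum>i\<in>{x. x \<in> I \<and> f x = y}. h (f i) / real (card {j\<in>I. f j = f i}))"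
    by (rule sum.image_gen[OF fin])
  also have "\<dots> = (\<Sum>y\<in>f ` I. h y)"
  proof (intro sum.cong refl)
    fix y assume y: "y \<in> f ` I"
    have "(\<Sum>i\<in>{x. x \<in> I \<and> f x = y}. h (f i) / real (card {j\<in>I. f j = f i}))
        = (\<Sum>i\<in>{x. x \<in> I \<and> f x = y}. h y / real (card {j\<in>I. f j = y}))"
      by (intro sum.cong) auto
    also have "\<dots> = real (card {x. x \<in> I \<and> f x = y}) * (h y / real (card {j\<in>I. f j = y}))" by simp
    also have "\<dots> = h y"
    proof -
      have "{x. x \<in> I \<and> f x = y} \<noteq> {}" using y by auto
      moreover have "finite {x. x \<in> I \<and> f x = y}" using fin by simp
      ultimately have "card {x. x \<in> I \<and> f x = y} > 0" by (simp add: card_gt_0_iff)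
      then show ?thesis by simp
    qed
    finally show "(\<Sum>i\<in>{x. x \<in> I \<and> f x = y}. h (f i) / real (card {j\<in>I. f j = f i})) = h y" .
  qed
  finally show ?thesis by simp
qed

lemma inner_vec_real: "inner (w::real^'n) u = (\<Sum>x\<in>UNIV. w$x * u$x)"
  by (simp add: inner_vec_def)

context
  fixes P :: "'s::finite \<Rightarrow> 'a::finite \<Rightarrow> 's \<Rightarrow> real" and \<gamma> :: real and \<rho> :: "'s \<Rightarrow> real"
  assumes K: "is_kernel P" and init: "is_distr \<rho>" and g0: "0 \<le> \<gamma>" and g1: "\<gamma> < 1"
begin

definition Mt :: "'s \<Rightarrow> real^('s \<times> 'a)" where
  "Mt s = (\<chi> x. (if fst x = s then 1 else 0) - \<gamma> * P (fst x) (snd x) s)"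

lemma Mt_inner: "inner w (Mt s) = (\<Sum>a\<in>UNIV. w$(s,a)) - \<gamma> * (\<Sum>x\<in>UNIV. w$x * P (fst x) (snd x) s)"
proof -
  have "inner w (Mt s) = (\<Sum>x\<in>UNIV. w$x * (if fst x = s then 1 else 0)) - \<gamma> * (\<Sum>x\<in>UNIV. w$x * P (fst x) (snd x) s)"
    unfolding inner_vec_real Mt_def by (simp add: algebra_simps sum_subtractf sum_distrib_left)
  also have "(\<Sum>x\<in>UNIV. w$x * (if fst x = s then 1 else 0)) = (\<Sum>s'\<in>UNIV. \<Sum>a\<in>UNIV. w$(s',a) * (if s' = s then 1 else 0))"
    by (subst sum_pair) simp
  also have "\<dots> = (\<Sum>s'\<in>UNIV. if s' = s then (\<Sum>a\<in>UNIV. w$(s',a)) else 0)"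
    by (intro sum.cong) auto
  also have "\<dots> = (\<Sum>a\<in>UNIV. w$(s,a))" by simp
  finally show ?thesis .
qed

lemma flow_sum_zero:
  assumes nn: "\<forall>x. w$x \<ge> 0" and fl: "\<forall>s. (\<Sum>a\<in>UNIV. w$(s,a)) = \<gamma> * (\<Sum>x\<in>UNIV. w$x * P (fst x) (snd x) s)"
  shows "\<forall>x. w$x = 0"
proof -
  have "(\<Sum>x\<in>UNIV. w$x) = (\<Sum>s\<in>UNIV. \<Sum>a\<in>UNIV. w$(s,a))" by (rule sum_pair)
  also have "\<dots> = \<gamma> * (\<Sum>s\<in>UNIV. \<Sum>x\<in>UNIV. w$x * P (fst x) (snd x) s)"
    using fl by (simp add: sum_distrib_left)
  also have "(\<Sum>s\<in>UNIV. \<Sum>x\<in>UNIV. w$x * P (fst x) (snd x) s) = (\<Sum>x\<in>UNIV. \<Sum>s\<in>UNIV. w$x * P (fst x) (snd x) s)"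
    by (rule sum.swap)
  also have "\<dots> = (\<Sum>x\<in>UNIV. w$x)"
    using K unfolding is_kernel_def is_distr_def by (simp add: sum_distrib_left[symmetric])
  finally have "(1 - \<gamma>) * (\<Sum>x\<in>UNIV. w$x) = 0" by (simp add: algebra_simps)
  then have "(\<Sum>x\<in>UNIV. w$x) = 0" using g1 by simp
  then show ?thesis using nn by (subst (asm) sum_nonneg_eq_0_iff) auto
qed

lemma farkas_ms:
  fixes c :: "nat \<Rightarrow> 's \<times> 'a \<Rightarrow> real" and b :: "nat \<Rightarrow> real" and r :: "'s \<times> 'a \<Rightarrow> real"
  assumes opt: "\<forall>w\<in>Kset P \<gamma> \<rho>. (\<forall>i<m. lin (c i) w - b i \<ge> 0) \<longrightarrow> lin r w \<le> Vs"
  shows "\<exists>ms. (\<forall>i<m. ms i \<ge> 0) \<and> (\<forall>w\<in>Kset P \<gamma> \<rho>. lin r w + (\<Sum>i<m. ms i * (lin (c i) w - b i)) \<le> Vs)"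
proof -
  define f1 where "f1 i = ((\<chi> x. c i x), b i)" for i
  define G1 where "G1 = f1 ` {..<m}"
  define Gen where "Gen = G1 \<union> (\<lambda>s. (Mt s, \<rho> s)) ` UNIV \<union> (\<lambda>s. - (Mt s, \<rho> s)) ` UNIV
      \<union> (\<lambda>x. (axis x 1, 0::real)) ` UNIV \<union> {(0, -1)}"
  define q where "q = ((\<chi> x. - r x), - Vs)"
  have fin: "finite Gen" unfolding Gen_def G1_def by simp
  have lin_inner: "inner w (\<chi> x. u x) = lin u w" for w u unfolding inner_vec_real lin_def by simp
  have lin_inner2: "inner w (vec_lambda u) = lin u w" for w u unfolding inner_vec_real lin_def by simp
  have qH: "q \<in> convex_cone hull Gen"
  proof (rule ccontr)
    assume "q \<notin> convex_cone hull Gen"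
    then obtain a where a: "\<forall>g\<in>Gen. inner a g \<ge> 0" "inner a q < 0" using cone_sep[OF fin] by blast
    obtain wv \<tau>' where awv: "a = (wv, \<tau>')" by (cases a)
    have nn: "\<forall>x. wv$x \<ge> 0"
    proof
      fix x have "(axis x 1, 0::real) \<in> Gen" unfolding Gen_def by blast
      then have "inner a (axis x 1, 0::real) \<ge> 0" using a by blast
      then show "wv$x \<ge> 0" unfolding awv by (simp add: inner_axis)
    qed
    have t0: "\<tau>' \<le> 0"
    proof -
      have "((0::real^('s\<times>'a)), -1::real) \<in> Gen" unfolding Gen_def by blast
      then have "inner a ((0::real^('s\<times>'a)), -1::real) \<ge> 0" using a by blast
      then show ?thesis unfolding awv by simp
    qed
    define \<tau> where "\<tau> = - \<tau>'"
    have tau0: "\<tau> \<ge> 0" unfolding \<tau>_def using t0 by simp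
    have fl: "(\<Sum>a\<in>UNIV. wv$(s,a)) - \<gamma> * (\<Sum>x\<in>UNIV. wv$x * P (fst x) (snd x) s) = \<tau> * \<rho> s" for s
    proof -
      have "(Mt s, \<rho> s) \<in> Gen" "- (Mt s, \<rho> s) \<in> Gen" unfolding Gen_def by blast+
      then have "inner a (Mt s, \<rho> s) \<ge> 0" "inner a (- (Mt s, \<rho> s)) \<ge> 0" using a by blast+
      then have "inner wv (Mt s) + \<tau>' * \<rho> s = 0" unfolding awv by simp
      then show ?thesis unfolding Mt_inner \<tau>_def by simp
    qed
    have cons: "lin (c i) wv \<ge> \<tau> * b i" if i: "i < m" for i
    proof -
      have "f1 i \<in> Gen" unfolding Gen_def G1_def using i by blast
      then have "inner a (f1 i) \<ge> 0" using a by blast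
      then show ?thesis unfolding awv f1_def \<tau>_def by (simp add: lin_inner)
    qed
    have obj: "lin r wv > \<tau> * Vs"
    proof -
      have "inner a q < 0" using a by blast
      moreover have "inner a q = - lin r wv + \<tau> * Vs"
      proof -
        have "inner wv (\<chi> x. - r x) = - lin r wv" unfolding inner_vec_real lin_def by (simp add: sum_negf)
        then show ?thesis unfolding awv q_def \<tau>_def by simp
      qed
      ultimately show ?thesis by simp
    qed
    show False
    proof (cases "\<tau> > 0")
      case True
      define w' where "w' = (1/\<tau>) *\<^sub>R wv"
      have w'K: "w' \<in> Kset P \<gamma> \<rho>"
        unfolding Kset_def
      proof (intro CollectI conjI allI)
        fix x have "wv$x \<ge> 0" using nn by blast
        then show "w'$x \<ge> 0" unfolding w'_def using True by simp
      next
        fix s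
        have "(\<Sum>a\<in>UNIV. w'$(s,a)) = (1/\<tau>) * (\<Sum>a\<in>UNIV. wv$(s,a))" unfolding w'_def by (simp add: sum_distrib_left)
        also have "\<dots> = (1/\<tau>) * (\<tau> * \<rho> s + \<gamma> * (\<Sum>x\<in>UNIV. wv$x * P (fst x) (snd x) s))"
          using fl[of s] by (simp add: algebra_simps)
        also have "\<dots> = \<rho> s + \<gamma> * (\<Sum>x\<in>UNIV. w'$x * P (fst x) (snd x) s)"
          unfolding w'_def using True by (simp add: sum_distrib_left algebra_simps)
        finally show "(\<Sum>a\<in>UNIV. w'$(s,a)) = \<rho> s + \<gamma> * (\<Sum>x\<in>UNIV. w'$x * P (fst x) (snd x) s)" .
      qed
      have lin_w': "lin u w' = lin u wv / \<tau>" for u unfolding w'_def lin_def by (simp add: sum_divide_distrib)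
      have "\<forall>i<m. lin (c i) w' - b i \<ge> 0"
      proof (intro allI impI)
        fix i assume "i < m"
        then have "lin (c i) wv \<ge> \<tau> * b i" by (rule cons)
        then have "lin (c i) wv / \<tau> \<ge> b i" using True by (simp add: le_divide_eq mult.commute)
        then show "lin (c i) w' - b i \<ge> 0" unfolding lin_w' by simp
      qed
      then have "lin r w' \<le> Vs" using opt w'K by blast
      moreover have "lin r w' > Vs" unfolding lin_w' using obj True by (simp add: less_divide_eq mult.commute)
      ultimately show False by simp
    next
      case False
      then have "\<tau> = 0" using tau0 by simp
      then have "\<forall>s. (\<Sum>a\<in>UNIV. wv$(s,a)) = \<gamma> * (\<Sum>x\<in>UNIV. wv$x * P (fst x) (snd x) s)" using fl by simp
      then have "\<forall>x. wv$x = 0" using flow_sum_zero nn by blast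
      then have "lin r wv = 0" unfolding lin_def by (metis (no_types, lifting) mult_eq_0_iff sum.neutral)
      then show False using obj \<open>\<tau> = 0\<close> by simp
    qed
  qed
  obtain cf where cf: "\<forall>g\<in>Gen. cf g \<ge> 0" "q = (\<Sum>g\<in>Gen. cf g *\<^sub>R g)"
    using cone_repr[OF fin qH] by blast
  define ms where "ms i = cf (f1 i) / real (card {j\<in>{..<m}. f1 j = f1 i})" for i
  have ms0: "\<forall>i<m. ms i \<ge> 0"
  proof (intro allI impI)
    fix i assume "i < m"
    then have "f1 i \<in> Gen" unfolding Gen_def G1_def by blast
    then show "ms i \<ge> 0" unfolding ms_def using cf(1) by simp
  qed
  have main: "lin r w + (\<Sum>i<m. ms i * (lin (c i) w - b i)) \<le> Vs" if w: "w \<in> Kset P \<gamma> \<rho>" for w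
  proof -
    define \<phi> where "\<phi> g = inner (w, -1::real) g" for g
    have wnn: "\<forall>x. w$x \<ge> 0" and wfl: "\<forall>s. (\<Sum>a\<in>UNIV. w$(s,a)) = \<rho> s + \<gamma> * (\<Sum>x\<in>UNIV. w$x * P (fst x) (snd x) s)"
      using w unfolding Kset_def by auto
    have phiq: "\<phi> q = Vs - lin r w"
    proof -
      have "inner w (\<chi> x. - r x) = - lin r w" unfolding inner_vec_real lin_def by (simp add: sum_negf)
      then show ?thesis unfolding \<phi>_def q_def by simp
    qed
    have phisum: "\<phi> q = (\<Sum>g\<in>Gen. cf g * \<phi> g)" unfolding cf(2) \<phi>_def by (simp add: inner_sum_right)
    have rest: "\<phi> g \<ge> 0" if g: "g \<in> Gen - G1" for g
    proof -
      have "g \<in> (\<lambda>s. (Mt s, \<rho> s)) ` UNIV \<or> g \<in> (\<lambda>s. - (Mt s, \<rho> s)) ` UNIV \<or> g \<in> (\<lambda>x. (axis x 1, 0::real)) ` UNIV \<or> g = (0, -1)"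
        using g unfolding Gen_def by blast
      moreover have "\<phi> (Mt s, \<rho> s) = 0" for s unfolding \<phi>_def using wfl by (simp add: Mt_inner)
      moreover have "\<phi> (axis x 1, 0) \<ge> 0" for x
      proof -
        have "w$x \<ge> 0" using wnn by blast
        then show ?thesis unfolding \<phi>_def by (simp add: inner_axis)
      qed
      moreover have "\<phi> (0, -1) \<ge> 0" unfolding \<phi>_def by simp
      moreover have "\<phi> (- h) = - \<phi> h" for h unfolding \<phi>_def by simp
      ultimately show ?thesis by auto
    qed
    have G1sub: "G1 \<subseteq> Gen" unfolding Gen_def by blast
    have "(\<Sum>g\<in>Gen. cf g * \<phi> g) = (\<Sum>g\<in>Gen - G1. cf g * \<phi> g) + (\<Sum>g\<in>G1. cf g * \<phi> g)"
      by (rule sum.subset_diff[OF G1sub fin])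
    moreover have "(\<Sum>g\<in>Gen - G1. cf g * \<phi> g) \<ge> 0" using cf(1) rest by (intro sum_nonneg) auto
    moreover have "(\<Sum>g\<in>G1. cf g * \<phi> g) = (\<Sum>i<m. ms i * (lin (c i) w - b i))"
    proof -
      have "(\<Sum>g\<in>G1. cf g * \<phi> g) = (\<Sum>i\<in>{..<m}. cf (f1 i) * \<phi> (f1 i) / real (card {j\<in>{..<m}. f1 j = f1 i}))"
        unfolding G1_def by (rule sum_image_avg) simp
      also have "\<dots> = (\<Sum>i<m. ms i * (lin (c i) w - b i))"
      proof (intro sum.cong refl)
        fix i
        have "\<phi> (f1 i) = lin (c i) w - b i" unfolding \<phi>_def f1_def by (simp add: lin_inner2)
        then show "cf (f1 i) * \<phi> (f1 i) / real (card {j\<in>{..<m}. f1 j = f1 i}) = ms i * (lin (c i) w - b i)"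
          unfolding ms_def by simp
      qed
      finally show ?thesis .
    qed
    ultimately show ?thesis using phiq phisum by simp
  qed
  show ?thesis using ms0 main by blast
qed

end

lemma min_max_aux: fixes g x :: real shows "g - max (g - x) 0 = min g x"
  by (simp add: max_def min_def)

lemma lin_cont: "continuous_on S (lin u)"
  unfolding lin_def by (intro continuous_intros)

lemma F_cont: "continuous_on S (\<lambda>z. lin r z + (\<Sum>i<m. psi \<beta> (lin (c i) z - b i) (l i)))"
  unfolding lin_def psi_def by (intro continuous_intros)

theorem theorem1:
  fixes P :: "'s::finite \<Rightarrow> 'a::finite \<Rightarrow> 's \<Rightarrow> real"
    and \<rho> :: "'s \<Rightarrow> real" and \<gamma> :: real
    and r :: "'s \<times> 'a \<Rightarrow> real" and c :: "nat \<Rightarrow> 's \<times> 'a \<Rightarrow> real"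
    and b :: "nat \<Rightarrow> real" and m :: nat and \<beta> :: real
  assumes kernel: "is_kernel P"
    and init: "is_distr \<rho>"
    and disc: "0 \<le> \<gamma>" "\<gamma> < 1"
    and rew: "\<forall>x. 0 \<le> r x \<and> r x \<le> 1"
    and cons: "\<forall>i<m. \<forall>x. 0 \<le> c i x \<and> c i x \<le> 1"
    and thr: "\<forall>i<m. 0 \<le> b i"
    and feas: "\<exists>pol. feasible_policy P \<gamma> \<rho> c b m pol"
    and beta: "\<beta> > 0"
  shows "\<forall>C1>0. \<exists>C2>0. \<forall>\<epsilon> (eps :: nat \<Rightarrow> real) (T :: nat) (pis :: nat \<Rightarrow> 's \<Rightarrow> 'a \<Rightarrow> real).
    0 < \<epsilon> \<and> \<epsilon> < 1
    \<and> (\<forall>t\<ge>1. eps t \<le> C1 / (real t)\<^sup>2)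
    \<and> real T \<ge> C2 / \<epsilon>\<^sup>2
    \<and> (\<forall>t\<in>{1..T+1}. is_policy (pis t))
    \<and> (\<forall>t\<in>{1..T}.
         aug_lag P \<gamma> \<rho> r c b m \<beta> (pis (t + 1)) (lam_seq P \<gamma> \<rho> c b \<beta> pis t)
         \<ge> Sup {aug_lag P \<gamma> \<rho> r c b m \<beta> pol (lam_seq P \<gamma> \<rho> c b \<beta> pis t) | pol. is_policy pol}
           - eps t)
    \<longrightarrow> Vrho P \<gamma> \<rho> (pis (T + 1)) r \<ge> opt_value P \<gamma> \<rho> r c b m - \<epsilon>
      \<and> (\<forall>i<m. Vrho P \<gamma> \<rho> (pis (T + 1)) (c i) \<ge> b i - \<epsilon>)"
proof -
  define Kv where "Kv = Kset P \<gamma> \<rho>"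
  define vf where "vf = lin r"
  define Gf where "Gf i w = lin (c i) w - b i" for i w
  obtain pol0 where pol0: "feasible_policy P \<gamma> \<rho> c b m pol0" using feas by blast
  have pol0p: "is_policy pol0" using pol0 unfolding feasible_policy_def by simp
  have cK: "compact Kv" unfolding Kv_def by (rule Kset_compact[OF kernel init disc])
  define KF where "KF = Kv \<inter> (\<Inter>i\<in>{..<m}. {w. 0 \<le> Gf i w})"
  have cKF: "compact KF"
  proof -
    have "closed (\<Inter>i\<in>{..<m}. {w. 0 \<le> Gf i w})"
      unfolding Gf_def by (intro closed_INT ballI closed_Collect_le continuous_intros lin_cont)
    then show ?thesis unfolding KF_def using cK by (rule compact_Int_closed[rotated])
  qed
  have ov0: "ovec P \<gamma> \<rho> pol0 \<in> KF"
  proof -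
    have "ovec P \<gamma> \<rho> pol0 \<in> Kv" unfolding Kv_def by (rule ovec_in[OF kernel init disc pol0p])
    moreover have "\<forall>i<m. 0 \<le> Gf i (ovec P \<gamma> \<rho> pol0)"
      using pol0 Vrho_lin[OF kernel init disc pol0p] unfolding feasible_policy_def Gf_def by simp
    ultimately show ?thesis unfolding KF_def by auto
  qed
  obtain y0 where y0: "y0 \<in> KF" "\<forall>w\<in>KF. vf w \<le> vf y0"
    using continuous_attains_sup[OF cKF _ lin_cont[of KF r]] ov0 unfolding vf_def by blast
  define Vs where "Vs = vf y0"
  have optK: "\<forall>w\<in>Kv. (\<forall>i<m. lin (c i) w - b i \<ge> 0) \<longrightarrow> lin r w \<le> Vs"
    using y0 unfolding KF_def Vs_def vf_def Gf_def by auto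
  obtain ms where ms: "\<forall>i<m. ms i \<ge> 0" "\<forall>w\<in>Kv. lin r w + (\<Sum>i<m. ms i * (lin (c i) w - b i)) \<le> Vs"
    using farkas_ms[OF kernel init disc optK[unfolded Kv_def]] unfolding Kv_def by blast
  have loc: "alm Kv vf Gf m \<beta> Vs ms y0"
  proof (unfold_locales)
    show "\<beta> > 0" by (rule beta)
    show "\<And>y z s. y \<in> Kv \<Longrightarrow> z \<in> Kv \<Longrightarrow> 0 \<le> s \<Longrightarrow> s \<le> 1 \<Longrightarrow> (1-s) *\<^sub>R y + s *\<^sub>R z \<in> Kv"
      unfolding Kv_def by (rule Kset_conv[OF kernel init disc])
    show "\<And>y z s. vf ((1-s) *\<^sub>R y + s *\<^sub>R z) = (1-s) * vf y + s * vf z" unfolding vf_def by (rule lin_aff)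
    show "\<And>i y z s. Gf i ((1-s) *\<^sub>R y + s *\<^sub>R z) = (1-s) * Gf i y + s * Gf i z"
      unfolding Gf_def lin_aff by (simp add: algebra_simps)
    show "\<And>l. \<exists>y\<in>Kv. \<forall>z\<in>Kv. vf z + (\<Sum>i<m. psi \<beta> (Gf i z) (l i)) \<le> vf y + (\<Sum>i<m. psi \<beta> (Gf i y) (l i))"
    proof -
      fix l
      have ne: "Kv \<noteq> {}" using ov0 unfolding KF_def by auto
      show "\<exists>y\<in>Kv. \<forall>z\<in>Kv. vf z + (\<Sum>i<m. psi \<beta> (Gf i z) (l i)) \<le> vf y + (\<Sum>i<m. psi \<beta> (Gf i y) (l i))"
        unfolding vf_def Gf_def by (rule continuous_attains_sup[OF cK ne F_cont])
    qed
    show "y0 \<in> Kv" using y0 unfolding KF_def by auto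
    show "\<forall>i<m. Gf i y0 \<ge> 0" using y0 unfolding KF_def by auto
    show "vf y0 \<ge> Vs" unfolding Vs_def by simp
    show "\<forall>i<m. ms i \<ge> 0" by (rule ms(1))
    show "\<forall>z\<in>Kv. vf z + (\<Sum>i<m. ms i * Gf i z) \<le> Vs" using ms(2) unfolding vf_def Gf_def by simp
  qed
  interpret A: alm Kv vf Gf m \<beta> Vs ms y0 by (rule loc)
  have optval: "opt_value P \<gamma> \<rho> r c b m \<le> Vs"
    unfolding opt_value_def
  proof (rule cSup_least)
    show "{Vrho P \<gamma> \<rho> pol r |pol. feasible_policy P \<gamma> \<rho> c b m pol} \<noteq> {}" using pol0 by blast
  next
    fix x assume "x \<in> {Vrho P \<gamma> \<rho> pol r |pol. feasible_policy P \<gamma> \<rho> c b m pol}"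
    then obtain pol where pol: "feasible_policy P \<gamma> \<rho> c b m pol" and x: "x = Vrho P \<gamma> \<rho> pol r" by blast
    have pp: "is_policy pol" using pol unfolding feasible_policy_def by simp
    have "ovec P \<gamma> \<rho> pol \<in> KF"
    proof -
      have "ovec P \<gamma> \<rho> pol \<in> Kv" unfolding Kv_def by (rule ovec_in[OF kernel init disc pp])
      moreover have "\<forall>i<m. 0 \<le> Gf i (ovec P \<gamma> \<rho> pol)"
        using pol Vrho_lin[OF kernel init disc pp] unfolding feasible_policy_def Gf_def by simp
      ultimately show ?thesis unfolding KF_def by auto
    qed
    then show "x \<le> Vs" using y0(2) x Vrho_lin[OF kernel init disc pp] unfolding Vs_def vf_def by simp
  qed
  have augF: "aug_lag P \<gamma> \<rho> r c b m \<beta> pol l = A.F l (ovec P \<gamma> \<rho> pol)" if pp: "is_policy pol" for pol l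
    unfolding A.F_def unfolding aug_lag_def vf_def Gf_def psi_def Vrho_lin[OF kernel init disc pp]
    by (simp add: sum_distrib_left)
  have supD: "Sup {aug_lag P \<gamma> \<rho> r c b m \<beta> pol l | pol. is_policy pol} = A.Dual l" for l
  proof (rule cSup_eq_maximum)
    obtain pol where pol: "is_policy pol" "ovec P \<gamma> \<rho> pol = A.ystar l"
      using Kset_real[OF kernel init disc] A.ystar(1)[of l] unfolding Kv_def by blast
    show "A.Dual l \<in> {aug_lag P \<gamma> \<rho> r c b m \<beta> pol l | pol. is_policy pol}"
    proof -
      have "A.F l (A.ystar l) = aug_lag P \<gamma> \<rho> r c b m \<beta> pol l" using augF[OF pol(1), of l] pol(2) by simp
      then show ?thesis unfolding A.Dual_def using pol(1) by blast
    qed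
  next
    fix x assume "x \<in> {aug_lag P \<gamma> \<rho> r c b m \<beta> pol l | pol. is_policy pol}"
    then obtain pol where pol: "is_policy pol" and x: "x = aug_lag P \<gamma> \<rho> r c b m \<beta> pol l" by blast
    have "ovec P \<gamma> \<rho> pol \<in> Kv" unfolding Kv_def by (rule ovec_in[OF kernel init disc pol])
    then show "x \<le> A.Dual l" using A.Dual_ge x augF[OF pol] by simp
  qed
  show ?thesis
  proof (intro allI impI)
    fix C1 :: real assume C1: "C1 > 0"
    obtain C2 where C2: "C2 > 0" and C2P: "\<forall>\<epsilon> (eps::nat\<Rightarrow>real) (T::nat) (lam::nat \<Rightarrow> nat \<Rightarrow> real) (ys::nat \<Rightarrow> real^('s\<times>'a)).
     0 < \<epsilon> \<and> \<epsilon> < 1 \<and> (\<forall>t\<ge>1. eps t \<le> C1/(real t)\<^sup>2) \<and> real T \<ge> C2/\<epsilon>\<^sup>2 \<and> (\<forall>i<m. lam 1 i = 0)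
     \<and> (\<forall>t\<in>{1..T}. ys (t+1) \<in> Kv \<and> A.F (lam t) (ys (t+1)) \<ge> A.Dual (lam t) - eps t
          \<and> (\<forall>i<m. lam (t+1) i = lam t i - \<beta>/2 * hh \<beta> (Gf i (ys (t+1))) (lam t i)))
     \<longrightarrow> vf (ys (T+1)) \<ge> Vs - \<epsilon> \<and> (\<forall>i<m. Gf i (ys (T+1)) \<ge> -\<epsilon>)"
      using A.main[OF C1] by blast
    show "\<exists>C2>0. \<forall>\<epsilon> (eps :: nat \<Rightarrow> real) (T :: nat) (pis :: nat \<Rightarrow> 's \<Rightarrow> 'a \<Rightarrow> real).
    0 < \<epsilon> \<and> \<epsilon> < 1
    \<and> (\<forall>t\<ge>1. eps t \<le> C1 / (real t)\<^sup>2)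
    \<and> real T \<ge> C2 / \<epsilon>\<^sup>2
    \<and> (\<forall>t\<in>{1..T+1}. is_policy (pis t))
    \<and> (\<forall>t\<in>{1..T}.
         aug_lag P \<gamma> \<rho> r c b m \<beta> (pis (t + 1)) (lam_seq P \<gamma> \<rho> c b \<beta> pis t)
         \<ge> Sup {aug_lag P \<gamma> \<rho> r c b m \<beta> pol (lam_seq P \<gamma> \<rho> c b \<beta> pis t) | pol. is_policy pol}
           - eps t)
    \<longrightarrow> Vrho P \<gamma> \<rho> (pis (T + 1)) r \<ge> opt_value P \<gamma> \<rho> r c b m - \<epsilon>
      \<and> (\<forall>i<m. Vrho P \<gamma> \<rho> (pis (T + 1)) (c i) \<ge> b i - \<epsilon>)"
    proof (rule exI[of _ C2], rule conjI[OF C2], intro allI impI)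
      fix \<epsilon> :: real and eps :: "nat \<Rightarrow> real" and T :: nat and pis :: "nat \<Rightarrow> 's \<Rightarrow> 'a \<Rightarrow> real"
      assume H: "0 < \<epsilon> \<and> \<epsilon> < 1
        \<and> (\<forall>t\<ge>1. eps t \<le> C1 / (real t)\<^sup>2)
        \<and> real T \<ge> C2 / \<epsilon>\<^sup>2
        \<and> (\<forall>t\<in>{1..T+1}. is_policy (pis t))
        \<and> (\<forall>t\<in>{1..T}.
         aug_lag P \<gamma> \<rho> r c b m \<beta> (pis (t + 1)) (lam_seq P \<gamma> \<rho> c b \<beta> pis t)
         \<ge> Sup {aug_lag P \<gamma> \<rho> r c b m \<beta> pol (lam_seq P \<gamma> \<rho> c b \<beta> pis t) | pol. is_policy pol}
           - eps t)"
      define lam where "lam = lam_seq P \<gamma> \<rho> c b \<beta> pis"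
      define ys where "ys t = ovec P \<gamma> \<rho> (pis t)" for t
      have pp: "\<And>t. 1 \<le> t \<Longrightarrow> t \<le> T + 1 \<Longrightarrow> is_policy (pis t)" using H by auto
      have l1: "\<forall>i<m. lam 1 i = 0" unfolding lam_def by (simp add: One_nat_def)
      have it: "\<forall>t\<in>{1..T}. ys (t+1) \<in> Kv \<and> A.F (lam t) (ys (t+1)) \<ge> A.Dual (lam t) - eps t
          \<and> (\<forall>i<m. lam (t+1) i = lam t i - \<beta>/2 * hh \<beta> (Gf i (ys (t+1))) (lam t i))"
      proof
        fix t assume t: "t \<in> {1..T}"
        have ppt: "is_policy (pis (t+1))" using pp t by auto
        have yK: "ys (t+1) \<in> Kv" unfolding ys_def Kv_def by (rule ovec_in[OF kernel init disc ppt])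
        have opt: "A.F (lam t) (ys (t+1)) \<ge> A.Dual (lam t) - eps t"
        proof -
          have "\<forall>t\<in>{1..T}. aug_lag P \<gamma> \<rho> r c b m \<beta> (pis (t + 1)) (lam t)
             \<ge> Sup {aug_lag P \<gamma> \<rho> r c b m \<beta> pol (lam t) | pol. is_policy pol} - eps t"
            using H unfolding lam_def by blast
          then have "aug_lag P \<gamma> \<rho> r c b m \<beta> (pis (t + 1)) (lam t)
             \<ge> Sup {aug_lag P \<gamma> \<rho> r c b m \<beta> pol (lam t) | pol. is_policy pol} - eps t"
            using t by blast
          then show ?thesis unfolding ys_def augF[OF ppt] supD .
        qed
        have upd: "\<forall>i<m. lam (t+1) i = lam t i - \<beta>/2 * hh \<beta> (Gf i (ys (t+1))) (lam t i)"
        proof (intro allI impI)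
          fix i assume "i < m"
          obtain t' where t': "t = Suc t'" using t by (cases t) auto
          have "lam (t+1) i = lam t i - \<beta>/2 * (Vrho P \<gamma> \<rho> (pis (t+1)) (c i) - (b i + max (Vrho P \<gamma> \<rho> (pis (t+1)) (c i) - b i - lam t i / \<beta>) 0))"
            unfolding lam_def t' by (simp add: Let_def)
          also have "Vrho P \<gamma> \<rho> (pis (t+1)) (c i) = Gf i (ys (t+1)) + b i"
            unfolding Gf_def ys_def Vrho_lin[OF kernel init disc ppt] by simp
          finally have X: "lam (t+1) i = lam t i - \<beta>/2 * (Gf i (ys (t+1)) + b i - (b i + max (Gf i (ys (t+1)) + b i - b i - lam t i / \<beta>) 0))" .
          have "Gf i (ys (t+1)) + b i - (b i + max (Gf i (ys (t+1)) + b i - b i - lam t i / \<beta>) 0)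
              = Gf i (ys (t+1)) - max (Gf i (ys (t+1)) - lam t i / \<beta>) 0" by simp
          also have "\<dots> = hh \<beta> (Gf i (ys (t+1))) (lam t i)" unfolding hh_def by (rule min_max_aux)
          finally show "lam (t+1) i = lam t i - \<beta>/2 * hh \<beta> (Gf i (ys (t+1))) (lam t i)"
            using X by simp
        qed
        show "ys (t+1) \<in> Kv \<and> A.F (lam t) (ys (t+1)) \<ge> A.Dual (lam t) - eps t
          \<and> (\<forall>i<m. lam (t+1) i = lam t i - \<beta>/2 * hh \<beta> (Gf i (ys (t+1))) (lam t i))"
          using yK opt upd by blast
      qed
      have concl: "vf (ys (T+1)) \<ge> Vs - \<epsilon> \<and> (\<forall>i<m. Gf i (ys (T+1)) \<ge> -\<epsilon>)"
        using C2P H l1 it by blast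
      have ppT: "is_policy (pis (T+1))" using pp by simp
      have "Vrho P \<gamma> \<rho> (pis (T + 1)) r = vf (ys (T+1))"
        unfolding vf_def ys_def by (rule Vrho_lin[OF kernel init disc ppT])
      moreover have "Vrho P \<gamma> \<rho> (pis (T + 1)) (c i) = Gf i (ys (T+1)) + b i" for i
        unfolding Gf_def ys_def Vrho_lin[OF kernel init disc ppT] by simp
      ultimately show "Vrho P \<gamma> \<rho> (pis (T + 1)) r \<ge> opt_value P \<gamma> \<rho> r c b m - \<epsilon>
        \<and> (\<forall>i<m. Vrho P \<gamma> \<rho> (pis (T + 1)) (c i) \<ge> b i - \<epsilon>)"
        using concl optval by auto
    qed
  qed
qed

end
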